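(* Let $\mathcal{K}\subseteq\mathbb{R}^n$ be a proper convex cone with a $\nu$-LHSCB $f$, and let $A\in\mathbb{R}^{m\times n}$ (full row rank), $\mathbf{b}\in\mathbb{R}^m$, $\mathbf{c}\in\mathbb{R}^n$. Let $\tau>0$, $0<\eta\le \frac14$, and let $(\mathbf{x},\mathbf{y},\mathbf{s})\in\mathcal{N}(\eta,\tau)$. Let $(\Delta\mathbf{x},\Delta\mathbf{y},\Delta\mathbf{s})$ be the solution of the Newton system at $(\mathbf{x},\mathbf{y},\mathbf{s})$ with parameter $\tau$, and set $(\mathbf{x}^+,\mathbf{y}^+,\mathbf{s}^+)=(\mathbf{x}+\Delta\mathbf{x},\mathbf{y}+\Delta\mathbf{y},\mathbf{s}+\Delta\mathbf{s})$. If $\vartheta=\frac{\eta/2}{\sqrt{\nu}+1}$, then $(\mathbf{x}^+,\mathbf{y}^+,\mathbf{s}^+)\in\mathcal{N}(\eta,\tau^+)$ with $\tau^+=(1-\vartheta)\tau$.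
   Context: $\mathcal{K}\subseteq\mathbb{R}^n$ is a proper (closed, convex, pointed, full-dimensional) cone with interior $\mathcal{K}^\circ$ and dual cone $\mathcal{K}^*=\{\mathbf{s}:\mathbf{s}^\top\mathbf{x}\ge 0\ \forall \mathbf{x}\in\mathcal{K}\}$. A $\nu$-LHSCB (logarithmically homogeneous self-concordant barrier with parameter $\nu$) for $\mathcal{K}$ is a strictly convex, three times differentiable $f:\mathcal{K}^\circ\to\mathbb{R}$ with $f(\mathbf{x})\to\infty$ as $\mathbf{x}$ approaches the boundary of $\mathcal{K}$, $|D^3f(\mathbf{x})[\mathbf{h},\mathbf{h},\mathbf{h}]|\le 2\,(D^2f(\mathbf{x})[\mathbf{h},\mathbf{h}])^{3/2}$ for all $\mathbf{x}\in\mathcal{K}^\circ,\mathbf{h}\in\mathbb{R}^n$, $\nu=\sup_{\mathbf{x}\in\mathcal{K}^\circ}g(\mathbf{x})^\top H(\mathbf{x})^{-1}g(\mathbf{x})<\infty$, and $f(t\mathbf{x})=f(\mathbf{x})-\nu\ln t$ for all $\mathbf{x}\in\mathcal{K}^\circ$, $t>0$; here $g$ and $H$ denote the gradient and Hessian of $f$. Local norms: $\|\mathbf{v}\|_{\mathbf{x}}=\sqrt{\mathbf{v}^\top H(\mathbf{x})\mathbf{v}}$ and $\|\mathbf{v}\|^*_{\mathbf{x}}=\sqrt{\mathbf{v}^\top H(\mathbf{x})^{-1}\mathbf{v}}$. The primal-dual pair is $\inf\{\mathbf{c}^\top\mathbf{x}: A\mathbf{x}=\mathbf{b},\mathbf{x}\in\mathcal{K}\}$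 and $\sup\{\mathbf{b}^\top\mathbf{y}: A^\top\mathbf{y}+\mathbf{s}=\mathbf{c},\mathbf{s}\in\mathcal{K}^*\}$. $\mathcal{F}^\circ=\{(\mathbf{x},\mathbf{y},\mathbf{s})\in\mathcal{K}^\circ\times\mathbb{R}^m\times(\mathcal{K}^* )^\circ: A\mathbf{x}=\mathbf{b},\ A^\top\mathbf{y}+\mathbf{s}=\mathbf{c}\}$. For $\eta,\tau>0$ the neighborhood is $\mathcal{N}(\eta,\tau)=\{(\mathbf{x},\mathbf{y},\mathbf{s})\in\mathcal{F}^\circ:\|\mathbf{s}+\tau g(\mathbf{x})\|^*_{\mathbf{x}}\le\eta\tau\}$. The Newton system at $(\mathbf{x},\mathbf{y},\mathbf{s})$ with parameter $\tau$ is: $A\Delta\mathbf{x}=\mathbf{0}$, $A^\top\Delta\mathbf{y}+\Delta\mathbf{s}=\mathbf{0}$, $\tau H(\mathbf{x})\Delta\mathbf{x}+\Delta\mathbf{s}=-(\mathbf{s}+\tau g(\mathbf{x}))$. *)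

theory Defs
  imports "HOL-Analysis.Analysis"
begin

definition proper_cone :: "(real^'n) set \<Rightarrow> bool" where
  "proper_cone K \<longleftrightarrow> closed K \<and> convex K \<and> cone K \<and> K \<noteq> {}
     \<and> (\<forall>x. x \<in> K \<and> - x \<in> K \<longrightarrow> x = 0) \<and> interior K \<noteq> {}"

definition dual_cone :: "(real^'n) set \<Rightarrow> (real^'n) set" where
  "dual_cone K = {s. \<forall>x\<in>K. s \<bullet> x \<ge> 0}"

definition strictly_convex_on :: "(real^'n) set \<Rightarrow> (real^'n \<Rightarrow> real) \<Rightarrow> bool" where
  "strictly_convex_on S f \<longleftrightarrow> (\<forall>x\<in>S. \<forall>y\<in>S. \<forall>t::real. x \<noteq> y \<and> 0 < t \<and> t < 1 \<longrightarrow>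
      f ((1 - t) *\<^sub>R x + t *\<^sub>R y) < (1 - t) * f x + t * f y)"

text \<open>nu-LHSCB f for K, with gradient g and Hessian H of f.
  The third derivative of f is the derivative H' of H:
  D^3 f(x)[h,h,h] = h . ((H' x h) *v h).\<close>
definition LHSCB :: "(real^'n) set \<Rightarrow> (real^'n \<Rightarrow> real) \<Rightarrow> (real^'n \<Rightarrow> real^'n)
     \<Rightarrow> (real^'n \<Rightarrow> real^'n^'n) \<Rightarrow> real \<Rightarrow> bool" where
  "LHSCB K f g H \<nu> \<longleftrightarrow>
     (\<forall>x\<in>interior K. (f has_derivative (\<lambda>h. g x \<bullet> h)) (at x))
   \<and> (\<forall>x\<in>interior K. (g has_derivative (\<lambda>h. H x *v h)) (at x))
   \<and> (\<exists>H'. \<forall>x\<in>interior K. (H has_derivative H' x) (at x)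
          \<and> (\<forall>h. \<bar>h \<bullet> (H' x h *v h)\<bar> \<le> 2 * (h \<bullet> (H x *v h)) powr (3/2)))
   \<and> strictly_convex_on (interior K) f
   \<and> (\<forall>p\<in>frontier K. filterlim f at_top (at p within interior K))
   \<and> (\<forall>x\<in>interior K. invertible (H x))
   \<and> bdd_above ((\<lambda>x. g x \<bullet> (matrix_inv (H x) *v g x)) ` interior K)
   \<and> \<nu> = (SUP x\<in>interior K. g x \<bullet> (matrix_inv (H x) *v g x))
   \<and> (\<forall>x\<in>interior K. \<forall>t>0. f (t *\<^sub>R x) = f x - \<nu> * ln t)"

definition dual_local_norm :: "(real^'n \<Rightarrow> real^'n^'n) \<Rightarrow> real^'n \<Rightarrow> real^'n \<Rightarrow> real" where
  "dual_local_norm H x v = sqrt (v \<bullet> (matrix_inv (H x) *v v))"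

definition strictly_feasible ::
  "(real^'n) set \<Rightarrow> real^'n^'m \<Rightarrow> real^'m \<Rightarrow> real^'n \<Rightarrow> ((real^'n) \<times> (real^'m) \<times> (real^'n)) set" where
  "strictly_feasible K A b c = {(x, y, s). x \<in> interior K \<and> s \<in> interior (dual_cone K)
      \<and> A *v x = b \<and> transpose A *v y + s = c}"

definition nbhd ::
  "(real^'n) set \<Rightarrow> (real^'n \<Rightarrow> real^'n) \<Rightarrow> (real^'n \<Rightarrow> real^'n^'n) \<Rightarrow>
   real^'n^'m \<Rightarrow> real^'m \<Rightarrow> real^'n \<Rightarrow> real \<Rightarrow> real \<Rightarrow> ((real^'n) \<times> (real^'m) \<times> (real^'n)) set" where
  "nbhd K g H A b c \<eta> \<tau> = {(x, y, s). (x, y, s) \<in> strictly_feasible K A b c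
      \<and> dual_local_norm H x (s + \<tau> *\<^sub>R g x) \<le> \<eta> * \<tau>}"

end

theory Submission
  imports Defs
begin

lemma sym_inner:
  fixes M :: "real^'n^'n"
  assumes "transpose M = M"
  shows "a \<bullet> (M *v b) = b \<bullet> (M *v a)"
  by (metis dot_lmul_matrix inner_commute transpose_matrix_vector assms)

lemma quad_expand:
  fixes M :: "real^'n^'n"
  assumes "transpose M = M"
  shows "(a + t *\<^sub>R b) \<bullet> (M *v (a + t *\<^sub>R b))
       = a \<bullet> (M *v a) + 2*t*(a \<bullet> (M *v b)) + t^2*(b \<bullet> (M *v b))"
proof -
  have "b \<bullet> (M *v a) = a \<bullet> (M *v b)" using sym_inner[OF assms] by simp
  then show ?thesis
    by (simp add: matrix_vector_right_distrib matrix_vector_mult_scaleR inner_add_left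
        inner_add_right power2_eq_square algebra_simps)
qed

lemma linquad:
  fixes D K :: real
  assumes "\<And>t. t * D \<le> K * t^2"
  shows "D = 0"
proof (rule ccontr)
  assume "D \<noteq> 0"
  define t where "t = D / (\<bar>K\<bar> + 1)"
  have p: "\<bar>K\<bar> + 1 > 0" by simp
  have "t * D = D^2 / (\<bar>K\<bar> + 1)" by (simp add: t_def power2_eq_square)
  moreover have "K * t^2 \<le> \<bar>K\<bar> * D^2 / (\<bar>K\<bar> + 1)^2"
  proof -
    have "K * t^2 \<le> \<bar>K\<bar> * t^2" by (intro mult_right_mono) auto
    also have "\<dots> = \<bar>K\<bar> * D^2 / (\<bar>K\<bar> + 1)^2" by (simp add: t_def power_divide)
    finally show ?thesis .
  qed
  moreover have "\<bar>K\<bar> * D^2 / (\<bar>K\<bar> + 1)^2 < D^2 / (\<bar>K\<bar> + 1)"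
  proof -
    have "D^2 > 0" using \<open>D \<noteq> 0\<close> by simp
    then have "\<bar>K\<bar> * D^2 < (\<bar>K\<bar> + 1) * D^2" by simp
    then have "\<bar>K\<bar> * D^2 / (\<bar>K\<bar> + 1)^2 < (\<bar>K\<bar> + 1) * D^2 / (\<bar>K\<bar> + 1)^2"
      using p by (intro divide_strict_right_mono) auto
    also have "\<dots> = D^2 / (\<bar>K\<bar> + 1)" using p by (simp add: power2_eq_square)
    finally show ?thesis .
  qed
  ultimately show False using assms[of t] by linarith
qed

lemma cs_psd:
  fixes M :: "real^'n^'n"
  assumes sym: "transpose M = M" and psd: "\<And>v. 0 \<le> v \<bullet> (M *v v)"
  shows "(a \<bullet> (M *v b))^2 \<le> (a \<bullet> (M *v a)) * (b \<bullet> (M *v b))"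
proof -
  let ?A = "a \<bullet> (M *v a)" and ?B = "a \<bullet> (M *v b)" and ?C = "b \<bullet> (M *v b)"
  have q: "0 \<le> ?A + 2*t*?B + t^2*?C" for t
    using psd[of "a + t *\<^sub>R b"] quad_expand[OF sym] by simp
  show ?thesis
  proof (cases "?C = 0")
    case True
    have "?B = 0"
    proof (rule ccontr)
      assume B: "?B \<noteq> 0"
      have "0 \<le> ?A + 2*(-(?A+1)/(2*?B))*?B" using q[of "-(?A+1)/(2*?B)"] True by simp
      also have "\<dots> = -1" using B by (simp add: field_simps)
      finally show False by simp
    qed
    then show ?thesis using True by simp
  next
    case False
    have C: "?C > 0" using psd[of b] False by simp
    have "0 \<le> ?A + 2*(-?B/?C)*?B + (-?B/?C)^2*?C" using q by blast
    also have "\<dots> = ?A - ?B^2/?C" using C by (simp add: field_simps power2_eq_square)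
    finally have "?B^2 / ?C \<le> ?A" by simp
    then show ?thesis using C by (simp add: field_simps mult.commute)
  qed
qed

lemma inv_props:
  fixes M :: "real^'n^'n"
  assumes "invertible M"
  shows "M ** matrix_inv M = mat 1" "matrix_inv M ** M = mat 1"
proof -
  have "\<exists>A'. M ** A' = mat 1 \<and> A' ** M = mat 1" using assms by (simp add: invertible_def)
  then have "M ** matrix_inv M = mat 1 \<and> matrix_inv M ** M = mat 1"
    unfolding matrix_inv_def by (rule someI_ex)
  then show "M ** matrix_inv M = mat 1" "matrix_inv M ** M = mat 1" by auto
qed

lemma inv_mv:
  fixes M :: "real^'n^'n"
  assumes "invertible M"
  shows "M *v (matrix_inv M *v v) = v" "matrix_inv M *v (M *v v) = v"
  using inv_props[OF assms] by (simp_all add: matrix_vector_mul_assoc)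

lemma inv_sym:
  fixes M :: "real^'n^'n"
  assumes sym: "transpose M = M" and inv: "invertible M"
  shows "transpose (matrix_inv M) = matrix_inv M"
proof -
  let ?P = "matrix_inv M"
  have "transpose (M ** ?P) = mat 1" using inv_props[OF inv] by (simp add: transpose_mat)
  then have 1: "transpose ?P ** M = mat 1" by (simp add: matrix_transpose_mul sym)
  have "transpose ?P = transpose ?P ** (M ** ?P)" using inv_props[OF inv] by simp
  also have "\<dots> = (transpose ?P ** M) ** ?P" by (simp add: matrix_mul_assoc)
  also have "\<dots> = ?P" using 1 by simp
  finally show ?thesis .
qed

lemma pd_lower:
  fixes M :: "real^'n^'n"
  assumes pd: "\<And>v. v \<noteq> 0 \<Longrightarrow> 0 < v \<bullet> (M *v v)"
  shows "\<exists>l>0. \<forall>v. l * (norm v)^2 \<le> v \<bullet> (M *v v)"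
proof -
  obtain u :: "real^'n" where u: "norm u = 1" using vector_choose_size[of 1] by auto
  have ne: "sphere (0::real^'n) 1 \<noteq> {}" using u by auto
  have cont: "continuous_on (sphere 0 1) (\<lambda>v::real^'n. v \<bullet> (M *v v))"
    by (intro continuous_intros)
  obtain x0 where x0: "x0 \<in> sphere 0 1" and min: "\<forall>y\<in>sphere 0 1. x0 \<bullet> (M *v x0) \<le> y \<bullet> (M *v y)"
    using continuous_attains_inf[OF compact_sphere ne cont] by blast
  have x0nz: "x0 \<noteq> 0" using x0 by auto
  let ?l = "x0 \<bullet> (M *v x0)"
  have lpos: "?l > 0" using pd[OF x0nz] .
  have "?l * (norm v)^2 \<le> v \<bullet> (M *v v)" for v
  proof (cases "v = 0")
    case True then show ?thesis by simp
  next
    case False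
    let ?w = "(1/norm v) *\<^sub>R v"
    have "?w \<in> sphere 0 1" using False by simp
    then have "?l \<le> ?w \<bullet> (M *v ?w)" using min by blast
    also have "\<dots> = (v \<bullet> (M *v v)) / (norm v)^2"
      by (simp add: matrix_vector_mult_scaleR power2_eq_square)
    finally show ?thesis using False by (simp add: field_simps)
  qed
  then show ?thesis using lpos by blast
qed

lemma am_gm_sqrt:
  fixes q :: real
  assumes "q \<ge> 0"
  shows "sqrt q \<le> (1 + q) / 2"
proof -
  have "(sqrt q - 1)^2 \<ge> 0" by simp
  then have "q - 2 * sqrt q + 1 \<ge> 0" using assms by (simp add: power2_eq_square algebra_simps)
  then show ?thesis by simp
qed

lemma trilinear_bound:
  fixes M :: "real^'n^'n" and L :: "real^'n \<Rightarrow> real^'n^'n"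
  assumes symM: "transpose M = M"
    and pd: "\<And>v. v \<noteq> 0 \<Longrightarrow> 0 < v \<bullet> (M *v v)"
    and lin: "linear L"
    and S1: "\<And>a b c. b \<bullet> (L a *v c) = a \<bullet> (L b *v c)"
    and S2: "\<And>a. transpose (L a) = L a"
    and diag: "\<And>v. \<bar>v \<bullet> (L v *v v)\<bar> \<le> 2 * (v \<bullet> (M *v v)) powr (3/2)"
  shows "\<bar>b \<bullet> (L a *v b)\<bar> \<le> 2 * sqrt (a \<bullet> (M *v a)) * (b \<bullet> (M *v b))"
proof -
  define Q where "Q v = v \<bullet> (M *v v)" for v
  define ip where "ip a b = a \<bullet> (M *v b)" for a b
  define T where "T a b c = b \<bullet> (L a *v c)" for a b c
  define S where "S = {v. Q v = 1}"
  define F where "F p = T (snd p) (fst p) (fst p)" for p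
  have psd: "0 \<le> v \<bullet> (M *v v)" for v using pd[of v] by (cases "v = 0") auto
  have Qnn: "Q v \<ge> 0" for v using psd by (simp add: Q_def)
  have ipsym: "ip a b = ip b a" for a b using sym_inner[OF symM] by (simp add: ip_def)
  have Qexp: "Q (a + t *\<^sub>R b) = Q a + 2*t*ip a b + t^2 * Q b" for a b t
    using quad_expand[OF symM] by (simp add: Q_def ip_def)
  have Qscale: "Q (t *\<^sub>R a) = t^2 * Q a" for t a
    by (simp add: Q_def matrix_vector_mult_scaleR power2_eq_square)
  have ipQ: "ip a a = Q a" for a by (simp add: ip_def Q_def)
  have cs: "(ip a b)^2 \<le> Q a * Q b" for a b
    using cs_psd[OF symM psd] by (simp add: ip_def Q_def)
  have Tsym23: "T a b c = T a c b" for a b c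
    using sym_inner[OF S2[of a]] by (simp add: T_def)
  have Tsym12: "T a b c = T b a c" for a b c using S1 by (simp add: T_def)
  have Tadd1: "T (a1 + t *\<^sub>R a2) b c = T a1 b c + t * T a2 b c" for a1 a2 t b c
    by (simp add: T_def linear_add[OF lin] linear_scale[OF lin] matrix_vector_mult_add_rdistrib
        scaleR_matrix_vector_assoc[symmetric] inner_add_right)
  have Tscale1: "T (t *\<^sub>R a) b c = t * T a b c" for t a b c
    using Tadd1[of 0 t a b c] by (simp add: T_def linear_0[OF lin])
  have Tadd2: "T a (b1 + t *\<^sub>R b2) c = T a b1 c + t * T a b2 c" for a b1 b2 t c
    by (simp add: T_def inner_add_left)
  have Tadd3: "T a b (c1 + t *\<^sub>R c2) = T a b c1 + t * T a b c2" for a b c1 c2 t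
    by (simp add: T_def matrix_vector_right_distrib matrix_vector_mult_scaleR inner_add_right)
  have Tscale3: "T a (t *\<^sub>R b) (t *\<^sub>R b) = t^2 * T a b b" for a b t
    using Tadd2[of a 0 t b "t *\<^sub>R b"] Tadd3[of a b 0 t b]
    by (simp add: T_def power2_eq_square)
  have Tquad: "T a (b + t *\<^sub>R c) (b + t *\<^sub>R c) = T a b b + 2*t*T a b c + t^2 * T a c c"
    for a b c t
    using Tadd2[of a b t c] Tadd3[of a b b t c] Tadd3[of a c b t c] Tsym23[of a c b]
    by (simp add: power2_eq_square algebra_simps)
  have T0: "T 0 b c = 0" for b c by (simp add: T_def linear_0[OF lin])
  have Tdiag: "\<bar>T v v v\<bar> \<le> 2" if "Q v = 1" for v
    using diag[of v] that by (simp add: T_def Q_def)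
  obtain l where l: "l > 0" "\<And>v. l * (norm v)^2 \<le> Q v" using pd_lower[OF pd] Q_def by auto
  have Sbd: "bounded S"
  proof -
    have "norm v \<le> sqrt (1/l)" if "v \<in> S" for v
    proof -
      have "l * (norm v)^2 \<le> 1" using l(2)[of v] that by (simp add: S_def)
      then have "(norm v)^2 \<le> 1/l" using l(1) by (simp add: field_simps)
      then show ?thesis by (simp add: real_le_rsqrt)
    qed
    then show ?thesis unfolding bounded_iff by blast
  qed
  have Scl: "closed S" unfolding S_def Q_def
    by (intro closed_Collect_eq continuous_intros)
  have "compact S" using Sbd Scl by (simp add: compact_eq_bounded_closed)
  then have Scomp: "compact (S \<times> S)" using compact_Times by blast
  obtain u :: "real^'n" where u: "u \<noteq> 0" using vector_choose_size[of 1] by (metis norm_zero zero_neq_one zero_le_one)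
  have Qpos: "Q v > 0" if "v \<noteq> 0" for v using pd[OF that] by (simp add: Q_def)
  have normS: "(1 / sqrt (Q v)) *\<^sub>R v \<in> S" if "v \<noteq> 0" for v
    using Qpos[OF that] by (simp add: S_def Qscale power_divide)
  have Sne: "S \<times> S \<noteq> {}" using normS[OF u] by blast
  have contL: "continuous_on UNIV L"
    using lin by (simp add: linear_continuous_on linear_conv_bounded_linear)
  have Fcont: "continuous_on (S \<times> S) F"
  proof -
    have c1: "continuous_on (S \<times> S) (\<lambda>p. L (snd p))"
      by (rule continuous_on_compose2[OF contL continuous_on_snd]) auto
    show ?thesis unfolding F_def T_def matrix_vector_mult_def
      by (intro continuous_intros c1)
  qed
  obtain p0 where p0: "p0 \<in> S \<times> S" and pmax: "\<forall>p\<in>S \<times> S. F p \<le> F p0"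
    using continuous_attains_sup[OF Scomp Sne Fcont] by blast
  define m where "m = F p0"
  have Fle: "T b a a \<le> m" if "a \<in> S" "b \<in> S" for a b
    using pmax that by (force simp: F_def m_def)
  have Snz: "v \<noteq> 0" if "v \<in> S" for v using that by (auto simp: S_def Q_def)
  have mnn: "m \<ge> 0"
  proof -
    obtain x y where "x \<in> S" "y \<in> S" using p0 by auto
    have "-y \<in> S" using \<open>y \<in> S\<close> Qscale[of "-1" y] by (simp add: S_def)
    then have "T (-y) x x \<le> m" using Fle \<open>x \<in> S\<close> by blast
    moreover have "T (-y) x x = - T y x x" using Tscale1[of "-1" y] by simp
    moreover have "T y x x \<le> m" using Fle \<open>x \<in> S\<close> \<open>y \<in> S\<close> by blast
    ultimately show ?thesis by linarith
  qed
  have hom: "T b a a \<le> m * Q a * sqrt (Q b)" for a b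
  proof (cases "a = 0 \<or> b = 0")
    case True
    then show ?thesis using T0 Tscale3[of b 0 a] by (auto simp: Q_def)
  next
    case False
    then have an: "a \<noteq> 0" and bn: "b \<noteq> 0" by auto
    have qa: "Q a > 0" and qb: "Q b > 0" using Qpos an bn by auto
    have "T ((1 / sqrt (Q b)) *\<^sub>R b) ((1 / sqrt (Q a)) *\<^sub>R a) ((1 / sqrt (Q a)) *\<^sub>R a) \<le> m"
      using Fle normS an bn by blast
    also have "T ((1 / sqrt (Q b)) *\<^sub>R b) ((1 / sqrt (Q a)) *\<^sub>R a) ((1 / sqrt (Q a)) *\<^sub>R a)
        = T b a a / (Q a * sqrt (Q b))"
      using qa qb by (simp add: Tscale1 Tscale3 power_divide)
    finally show ?thesis using qa qb by (simp add: field_simps)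
  qed
  (* stationarity *)
  have C1: "T v x x = m * ip y v" if xy: "x \<in> S" "y \<in> S" "T y x x = m" for x y v
  proof -
    have "t * (T v x x - m * ip y v) \<le> (m * Q v / 2) * t^2" for t
    proof -
      have "T (y + t *\<^sub>R v) x x \<le> m * Q x * sqrt (Q (y + t *\<^sub>R v))" by (rule hom)
      also have "\<dots> = m * sqrt (Q (y + t *\<^sub>R v))" using xy by (simp add: S_def)
      also have "\<dots> \<le> m * ((1 + Q (y + t *\<^sub>R v)) / 2)"
        using am_gm_sqrt[OF Qnn] mnn by (intro mult_left_mono) auto
      also have "\<dots> = m + m * t * ip y v + (m * Q v / 2) * t^2"
        using xy by (simp add: Qexp S_def algebra_simps)
      finally have "T (y + t *\<^sub>R v) x x \<le> m + m * t * ip y v + (m * Q v / 2) * t^2" .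
      moreover have "T (y + t *\<^sub>R v) x x = m + t * T v x x" using Tadd1 xy by simp
      ultimately show ?thesis by (simp add: algebra_simps)
    qed
    then show ?thesis using linquad[of "T v x x - m * ip y v" "m * Q v / 2"] by simp
  qed
  have C2: "T y x v = m * ip x v" if xy: "x \<in> S" "y \<in> S" "T y x x = m" for x y v
  proof -
    have "t * (2 * T y x v - 2 * m * ip x v) \<le> (m * Q v - T y v v) * t^2" for t
    proof -
      have "T y (x + t *\<^sub>R v) (x + t *\<^sub>R v) \<le> m * Q (x + t *\<^sub>R v) * sqrt (Q y)" by (rule hom)
      also have "\<dots> = m * Q (x + t *\<^sub>R v)" using xy by (simp add: S_def)
      also have "\<dots> = m + 2 * t * m * ip x v + m * Q v * t^2"
        using xy by (simp add: Qexp S_def algebra_simps)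
      finally show ?thesis using Tquad[of y x t v] xy by (simp add: algebra_simps)
    qed
    then show ?thesis using linquad[of "2 * T y x v - 2 * m * ip x v" "m * Q v - T y v v"] by simp
  qed
  have diagm: "T x x x = m * ip x y" if xy: "x \<in> S" "y \<in> S" "T y x x = m" for x y
    using C1[OF xy, of x] ipsym by simp
  have cbound: "ip x y \<ge> -1" "ip x y \<le> 1" if "x \<in> S" "y \<in> S" for x y
  proof -
    have "(ip x y)^2 \<le> 1" using cs[of x y] that by (simp add: S_def)
    then have "\<bar>ip x y\<bar> \<le> 1" by (simp add: abs_square_le_1)
    then show "ip x y \<ge> -1" "ip x y \<le> 1" by auto
  qed
  have step: "\<exists>x' y'. x' \<in> S \<and> y' \<in> S \<and> T y' x' x' = m \<and> ip x' y' = sqrt ((1 + ip x y) / 2)"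
    if xy: "x \<in> S" "y \<in> S" "T y x x = m" and c: "ip x y > -1" for x y
  proof -
    define c where "c = ip x y"
    have Qxy: "Q (x + y) = 2 + 2 * c"
      using Qexp[of x 1 y] xy by (simp add: S_def c_def)
    have pos: "2 + 2 * c > 0" using c by (simp add: c_def)
    define z where "z = (1 / sqrt (2 + 2*c)) *\<^sub>R (x + y)"
    have zS: "z \<in> S" using Qxy pos by (simp add: z_def S_def Qscale power_divide)
    have Txxy: "T x x y = m"
      using xy(3) Tsym23[of x x y] Tsym12[of x y x] by simp
    have Txyy: "T x y y = m * c"
      using C2[OF xy, of y] Tsym12[of x y y] by (simp add: c_def)
    have Txxx: "T x x x = m * c" using diagm[OF xy] by (simp add: c_def)
    have "T x (x + y) (x + y) = T x x x + 2 * T x x y + T x y y"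
      using Tquad[of x x 1 y] by simp
    also have "\<dots> = m * (2 + 2 * c)" using Txxy Txyy Txxx by (simp add: algebra_simps)
    finally have A: "T x (x + y) (x + y) = m * (2 + 2 * c)" .
    have Tz: "T x z z = m" unfolding z_def
      using Tscale3[of x "1 / sqrt (2 + 2*c)" "x + y"] A pos
      by (simp add: power_divide)
    have "ip z x = (1 / sqrt (2 + 2*c)) * (ip x x + ip y x)"
      by (simp add: z_def ip_def inner_add_left)
    also have "\<dots> = (1 + c) / sqrt (2 + 2*c)"
      using xy ipQ[of x] ipsym[of y x] by (simp add: S_def c_def)
    also have "\<dots> = sqrt ((1 + c) / 2)"
    proof -
      have e2: "sqrt (2 + 2*c) = sqrt 2 * sqrt (1 + c)"
        by (simp add: real_sqrt_mult[symmetric] algebra_simps)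
      have "(1 + c) / sqrt (2 + 2*c) = ((1 + c) / sqrt (1 + c)) / sqrt 2"
        unfolding e2 divide_divide_eq_left by (simp add: mult.commute)
      also have "\<dots> = sqrt (1 + c) / sqrt 2" using pos by (simp add: real_div_sqrt)
      also have "\<dots> = sqrt ((1 + c) / 2)" by (simp add: real_sqrt_divide)
      finally show ?thesis .
    qed
    finally show ?thesis using zS xy Tz by (auto simp: c_def)
  qed
  have iter: "\<exists>x y. x \<in> S \<and> y \<in> S \<and> T y x x = m \<and> ip x y > -1 \<and> 1 - ip x y \<le> 2 / 2^k"
    if base: "x0 \<in> S" "y0 \<in> S" "T y0 x0 x0 = m" "ip x0 y0 > -1" for x0 y0 k
  proof (induction k)
    case 0
    then show ?case using base cbound[of x0 y0] by (intro exI[of _ x0] exI[of _ y0]) auto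
  next
    case (Suc k)
    then obtain x y where xy: "x \<in> S" "y \<in> S" "T y x x = m" "ip x y > -1" "1 - ip x y \<le> 2 / 2^k"
      by blast
    obtain x' y' where xy': "x' \<in> S" "y' \<in> S" "T y' x' x' = m" "ip x' y' = sqrt ((1 + ip x y) / 2)"
      using step[OF xy(1-4)] by blast
    define q where "q = (1 + ip x y) / 2"
    have q01: "0 \<le> q" "q \<le> 1" using cbound[OF xy(1,2)] by (auto simp: q_def)
    have "q \<le> sqrt q"
    proof -
      have "q * q \<le> q" using q01 mult_left_le[of q q] by simp
      then show ?thesis using q01 by (simp add: real_le_rsqrt power2_eq_square)
    qed
    then have "1 - ip x' y' \<le> 1 - q" using xy' by (simp add: q_def)
    also have "\<dots> = (1 - ip x y) / 2" by (simp add: q_def field_simps)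
    also have "\<dots> \<le> 2 / 2^(Suc k)" using xy(5) by simp
    finally have "1 - ip x' y' \<le> 2 / 2^(Suc k)" .
    moreover have "ip x' y' > -1"
    proof -
      have "ip x' y' = sqrt q" using xy'(4) by (simp add: q_def)
      then have "ip x' y' \<ge> 0" using q01(1) by simp
      then show ?thesis by linarith
    qed
    ultimately show ?case using xy' by blast
  qed
  have m2: "m \<le> 2"
  proof -
    obtain x0 y0 where p0': "x0 \<in> S" "y0 \<in> S" "T y0 x0 x0 = m"
      using p0 by (auto simp: m_def F_def)
    show ?thesis
    proof (cases "ip x0 y0 = -1")
      case True
      then have "T x0 x0 x0 = - m" using diagm[OF p0'] by simp
      then show ?thesis using Tdiag[of x0] p0' by (simp add: S_def)
    next
      case False
      then have gt: "ip x0 y0 > -1" using cbound[OF p0'(1,2)] by simp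
      have "m - 2 \<le> m * (2 / 2^k)" for k
      proof -
        obtain x y where xy: "x \<in> S" "y \<in> S" "T y x x = m" "1 - ip x y \<le> 2 / 2^k"
          using iter[OF p0' gt, of k] by blast
        have "m * ip x y \<le> 2" using diagm[OF xy(1-3)] Tdiag[of x] xy by (simp add: S_def)
        moreover have "m * (1 - ip x y) \<le> m * (2 / 2^k)" using xy(4) mnn by (rule mult_left_mono)
        ultimately show ?thesis by (simp add: algebra_simps)
      qed
      show ?thesis
      proof (rule ccontr)
        assume "\<not> m \<le> 2"
        then have mg: "m > 2" by simp
        obtain k where k: "2 * m / (m - 2) < 2^k"
          using real_arch_pow[of 2 "2 * m / (m - 2)"] by auto
        have "m * 2 < (m - 2) * 2^k" using k mg by (simp add: field_simps)
        then have "m * (2 / 2^k) < m - 2" by (simp add: field_simps)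
        then show False using \<open>m - 2 \<le> m * (2 / 2^k)\<close> by simp
      qed
    qed
  qed
  have "T a b b \<le> 2 * sqrt (Q a) * Q b" for a
  proof -
    have X: "Q b * sqrt (Q a) \<ge> 0" using Qnn[of a] Qnn[of b] by simp
    have "T a b b \<le> m * (Q b * sqrt (Q a))" using hom[where a=b and b=a] by (simp add: mult.assoc)
    also have "\<dots> \<le> 2 * (Q b * sqrt (Q a))" using m2 X by (rule mult_right_mono)
    finally show ?thesis by (simp add: algebra_simps)
  qed
  from this[of a] this[of "-a"] have "\<bar>T a b b\<bar> \<le> 2 * sqrt (Q a) * Q b"
    using Tscale1[of "-1" a] Qscale[of "-1" a] by simp
  then show ?thesis by (simp add: T_def Q_def)
qed

lemma line_has_derivative:
  fixes F :: "real^'n \<Rightarrow> 'b::real_normed_vector"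
  assumes "(F has_derivative F') (at (p + s *\<^sub>R u))"
  shows "((\<lambda>t. F (p + t *\<^sub>R u)) has_derivative (\<lambda>d. F' (d *\<^sub>R u))) (at s)"
proof -
  have "((\<lambda>t. p + t *\<^sub>R u) has_derivative (\<lambda>d. d *\<^sub>R u)) (at s)"
    by (intro derivative_eq_intros) auto
  from diff_chain_at[OF this assms] show ?thesis by (simp add: o_def)
qed

lemma line_real_deriv:
  fixes F :: "real^'n \<Rightarrow> real"
  assumes "(F has_derivative (\<lambda>h. G \<bullet> h)) (at (p + s *\<^sub>R u))"
  shows "((\<lambda>t. F (p + t *\<^sub>R u)) has_real_derivative (G \<bullet> u)) (at s)"
proof -
  have eq: "(\<lambda>d. G \<bullet> (d *\<^sub>R u)) = (*) (G \<bullet> u)" by (auto simp: fun_eq_iff)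
  show ?thesis unfolding has_field_derivative_def using line_has_derivative[OF assms] eq by simp
qed

lemma line_real_deriv_lin:
  fixes F :: "real^'n \<Rightarrow> 'b::real_normed_vector" and B :: "'b \<Rightarrow> real"
  assumes "(F has_derivative F') (at (p + s *\<^sub>R u))" and "bounded_linear B"
  shows "((\<lambda>t. B (F (p + t *\<^sub>R u))) has_real_derivative (B (F' u))) (at s)"
proof -
  have lin: "linear F'" using assms(1) has_derivative_linear by blast
  have d: "((\<lambda>t. B (F (p + t *\<^sub>R u))) has_derivative (\<lambda>d. B (F' (d *\<^sub>R u)))) (at s)"
    using bounded_linear.has_derivative[OF assms(2) line_has_derivative[OF assms(1)]] .
  have eq: "(\<lambda>d. B (F' (d *\<^sub>R u))) = (*) (B (F' u))"
    by (auto simp: fun_eq_iff linear_scale[OF lin] linear_scale[OF bounded_linear.linear[OF assms(2)]])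
  show ?thesis unfolding has_field_derivative_def using d eq by simp
qed

lemma dist_add_self: "dist z (z + v) = norm (v::'a::real_normed_vector)"
  by (metis add_diff_cancel_left' dist_commute dist_norm)

lemma schwarz_half:
  fixes \<psi> :: "real^'n \<Rightarrow> real" and G L :: "real^'n \<Rightarrow> real^'n"
  assumes ball: "ball z \<rho> \<subseteq> U"
    and dpsi: "\<And>w. w \<in> U \<Longrightarrow> (\<psi> has_derivative (\<lambda>h. G w \<bullet> h)) (at w)"
    and rem: "\<And>y. norm (y - z) < \<delta> \<Longrightarrow> norm (G y - G z - L (y - z)) \<le> e * norm (y - z)"
    and linL: "linear L"
    and t: "t > 0" "t * (norm h + norm u) < \<rho>" "t * (norm h + norm u) < \<delta>"
    and e: "e \<ge> 0"
  shows "\<bar>(\<psi> (z + t *\<^sub>R h + t *\<^sub>R u) - \<psi> (z + t *\<^sub>R h) - \<psi> (z + t *\<^sub>R u) + \<psi> z)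
           - t^2 * (u \<bullet> L h)\<bar> \<le> t^2 * e * (norm h + 2 * norm u) * norm u"
proof -
  define \<phi> where "\<phi> s = \<psi> (z + t *\<^sub>R h + s *\<^sub>R u) - \<psi> (z + s *\<^sub>R u)" for s
  define \<phi>' where "\<phi>' s = (G (z + t *\<^sub>R h + s *\<^sub>R u) - G (z + s *\<^sub>R u)) \<bullet> u" for s
  have nb: "norm (t *\<^sub>R h + s *\<^sub>R u) \<le> t * (norm h + norm u)" "norm (s *\<^sub>R u) \<le> t * norm u"
    if "0 \<le> s" "s \<le> t" for s
  proof -
    have "norm (t *\<^sub>R h + s *\<^sub>R u) \<le> t * norm h + s * norm u"
      using norm_triangle_ineq[of "t *\<^sub>R h" "s *\<^sub>R u"] that t by simp
    also have "\<dots> \<le> t * (norm h + norm u)" using that by (simp add: algebra_simps mult_right_mono)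
    finally show "norm (t *\<^sub>R h + s *\<^sub>R u) \<le> t * (norm h + norm u)" .
    show "norm (s *\<^sub>R u) \<le> t * norm u" using that by (simp add: mult_right_mono)
  qed
  have inU: "z + t *\<^sub>R h + s *\<^sub>R u \<in> U" "z + s *\<^sub>R u \<in> U" if "0 \<le> s" "s \<le> t" for s
  proof -
    have "norm (t *\<^sub>R h + s *\<^sub>R u) < \<rho>" using nb[OF that] t by linarith
    then have "z + (t *\<^sub>R h + s *\<^sub>R u) \<in> ball z \<rho>" using dist_add_self[of z] by simp
    then show "z + t *\<^sub>R h + s *\<^sub>R u \<in> U" using ball by (auto simp: add.assoc)
    have "t * norm u \<le> t * (norm h + norm u)" using t by simp
    then have "norm (s *\<^sub>R u) < \<rho>" using nb[OF that] t by linarith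
    then have "z + s *\<^sub>R u \<in> ball z \<rho>" using dist_add_self[of z] by simp
    then show "z + s *\<^sub>R u \<in> U" using ball by auto
  qed
  have der: "DERIV \<phi> s :> \<phi>' s" if "0 \<le> s" "s \<le> t" for s
  proof -
    have d1: "((\<lambda>s. \<psi> ((z + t *\<^sub>R h) + s *\<^sub>R u)) has_real_derivative (G (z + t *\<^sub>R h + s *\<^sub>R u) \<bullet> u)) (at s)"
      by (rule line_real_deriv) (use dpsi inU[OF that] in auto)
    have d2: "((\<lambda>s. \<psi> (z + s *\<^sub>R u)) has_real_derivative (G (z + s *\<^sub>R u) \<bullet> u)) (at s)"
      by (rule line_real_deriv) (use dpsi inU[OF that] in auto)
    show ?thesis unfolding \<phi>_def \<phi>'_def using DERIV_diff[OF d1 d2] by (simp add: inner_diff_left)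
  qed
  obtain \<xi> where xi: "0 < \<xi>" "\<xi> < t" and mvt: "\<phi> t - \<phi> 0 = (t - 0) * \<phi>' \<xi>"
    using MVT2[OF t(1) der] by auto
  have Delta: "\<phi> t - \<phi> 0 = \<psi> (z + t *\<^sub>R h + t *\<^sub>R u) - \<psi> (z + t *\<^sub>R h) - \<psi> (z + t *\<^sub>R u) + \<psi> z"
    by (simp add: \<phi>_def)
  define v1 where "v1 = t *\<^sub>R h + \<xi> *\<^sub>R u"
  define v2 where "v2 = \<xi> *\<^sub>R u"
  have n1: "norm v1 \<le> t * (norm h + norm u)" "norm v2 \<le> t * norm u"
    using nb[of \<xi>] xi by (auto simp: v1_def v2_def)
  have "t * norm u \<le> t * (norm h + norm u)" using t by simp
  then have lt: "norm v1 < \<delta>" "norm v2 < \<delta>" using n1 t by linarith+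
  define R1 where "R1 = G (z + v1) - G z - L v1"
  define R2 where "R2 = G (z + v2) - G z - L v2"
  have R1: "norm R1 \<le> e * norm v1" using rem[of "z + v1"] lt by (simp add: R1_def)
  have R2: "norm R2 \<le> e * norm v2" using rem[of "z + v2"] lt by (simp add: R2_def)
  have Lv: "L v1 - L v2 = t *\<^sub>R L h"
    by (simp add: v1_def v2_def linear_add[OF linL] linear_scale[OF linL])
  have "\<phi>' \<xi> = (G (z + v1) - G (z + v2)) \<bullet> u" by (simp add: \<phi>'_def v1_def v2_def add.assoc)
  also have "G (z + v1) - G (z + v2) = t *\<^sub>R L h + (R1 - R2)"
    using Lv by (simp add: R1_def R2_def algebra_simps)
  finally have phi': "\<phi>' \<xi> = t * (u \<bullet> L h) + (R1 - R2) \<bullet> u"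
    by (simp add: inner_add_left inner_add_right inner_commute)
  have "\<bar>(R1 - R2) \<bullet> u\<bar> \<le> norm (R1 - R2) * norm u" by (rule Cauchy_Schwarz_ineq2)
  also have "norm (R1 - R2) \<le> e * (t * (norm h + norm u)) + e * (t * norm u)"
  proof -
    have "norm (R1 - R2) \<le> norm R1 + norm R2" by (rule norm_triangle_ineq4)
    also have "\<dots> \<le> e * norm v1 + e * norm v2" using R1 R2 by simp
    also have "\<dots> \<le> e * (t * (norm h + norm u)) + e * (t * norm u)"
      using n1 e by (intro add_mono mult_left_mono) auto
    finally show ?thesis .
  qed
  then have "norm (R1 - R2) * norm u \<le> (e * (t * (norm h + norm u)) + e * (t * norm u)) * norm u"
    by (rule mult_right_mono) simp
  finally have bd: "\<bar>(R1 - R2) \<bullet> u\<bar> \<le> t * e * (norm h + 2 * norm u) * norm u"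
    by (simp add: algebra_simps)
  have "t * \<phi>' \<xi> - t^2 * (u \<bullet> L h) = t * ((R1 - R2) \<bullet> u)"
    by (simp add: phi' power2_eq_square algebra_simps)
  then have "\<bar>t * \<phi>' \<xi> - t^2 * (u \<bullet> L h)\<bar> = t * \<bar>(R1 - R2) \<bullet> u\<bar>"
    using t by (simp add: abs_mult)
  also have "\<dots> \<le> t * (t * e * (norm h + 2 * norm u) * norm u)"
    using bd t by (intro mult_left_mono) auto
  finally show ?thesis using mvt Delta by (simp add: power2_eq_square algebra_simps)
qed

lemma schwarz:
  fixes \<psi> :: "real^'n \<Rightarrow> real" and G L :: "real^'n \<Rightarrow> real^'n"
  assumes U: "open U" "z \<in> U"
    and dpsi: "\<And>w. w \<in> U \<Longrightarrow> (\<psi> has_derivative (\<lambda>h. G w \<bullet> h)) (at w)"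
    and dG: "(G has_derivative L) (at z)"
  shows "u \<bullet> L h = h \<bullet> L u"
proof -
  have linL: "linear L" using dG has_derivative_linear by blast
  obtain \<rho> where rho: "\<rho> > 0" "ball z \<rho> \<subseteq> U" using U open_contains_ball by blast
  define K where "K = (norm h + 2 * norm u) * norm u + (norm u + 2 * norm h) * norm h"
  have Knn: "K \<ge> 0" by (simp add: K_def)
  have "\<bar>u \<bullet> L h - h \<bullet> L u\<bar> \<le> e * K" if e: "e > 0" for e
  proof -
    obtain \<delta> where d: "\<delta> > 0" and rem: "\<And>y. norm (y - z) < \<delta> \<Longrightarrow> norm (G y - G z - L (y - z)) \<le> e * norm (y - z)"
      using dG e unfolding has_derivative_at_alt by blast
    define t where "t = min \<rho> \<delta> / (2 * (norm h + norm u + 1))"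
    have den: "2 * (norm h + norm u + 1) > 0" by (simp add: add_nonneg_pos)
    have t0: "t > 0" using rho d den by (simp add: t_def)
    have tb: "t * (norm h + norm u) < min \<rho> \<delta>"
    proof -
      have "t * (norm h + norm u) \<le> t * (norm h + norm u + 1)" using t0 by simp
      also have "\<dots> = min \<rho> \<delta> / 2" using den by (simp add: t_def field_simps)
      also have "\<dots> < min \<rho> \<delta>" using rho d by linarith
      finally show ?thesis .
    qed
    have tb': "t * (norm u + norm h) < min \<rho> \<delta>" using tb by (simp add: add.commute)
    have h1: "\<bar>(\<psi> (z + t *\<^sub>R h + t *\<^sub>R u) - \<psi> (z + t *\<^sub>R h) - \<psi> (z + t *\<^sub>R u) + \<psi> z)
           - t^2 * (u \<bullet> L h)\<bar> \<le> t^2 * e * (norm h + 2 * norm u) * norm u"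
      using schwarz_half[OF rho(2) dpsi rem linL t0, where h=h and u=u] tb e by auto
    have h2: "\<bar>(\<psi> (z + t *\<^sub>R u + t *\<^sub>R h) - \<psi> (z + t *\<^sub>R u) - \<psi> (z + t *\<^sub>R h) + \<psi> z)
           - t^2 * (h \<bullet> L u)\<bar> \<le> t^2 * e * (norm u + 2 * norm h) * norm h"
      using schwarz_half[OF rho(2) dpsi rem linL t0, where h=u and u=h] tb' e by auto
    have eqz: "z + t *\<^sub>R u + t *\<^sub>R h = z + t *\<^sub>R h + t *\<^sub>R u" by (simp add: algebra_simps)
    define D where "D = \<psi> (z + t *\<^sub>R h + t *\<^sub>R u) - \<psi> (z + t *\<^sub>R h) - \<psi> (z + t *\<^sub>R u) + \<psi> z"
    have h1': "\<bar>D - t^2 * (u \<bullet> L h)\<bar> \<le> t^2 * e * (norm h + 2 * norm u) * norm u"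
      using h1 by (simp add: D_def)
    have "\<psi> (z + t *\<^sub>R u + t *\<^sub>R h) - \<psi> (z + t *\<^sub>R u) - \<psi> (z + t *\<^sub>R h) + \<psi> z = D"
      unfolding eqz D_def by simp
    then have h2': "\<bar>D - t^2 * (h \<bullet> L u)\<bar> \<le> t^2 * e * (norm u + 2 * norm h) * norm h"
      using h2 by simp
    have "(D - t^2 * (h \<bullet> L u)) - (D - t^2 * (u \<bullet> L h)) = t^2 * (u \<bullet> L h - h \<bullet> L u)"
      by (simp add: algebra_simps)
    then have "t^2 * \<bar>u \<bullet> L h - h \<bullet> L u\<bar> = \<bar>(D - t^2 * (h \<bullet> L u)) - (D - t^2 * (u \<bullet> L h))\<bar>"
      by (simp add: abs_mult)
    also have "\<dots> \<le> \<bar>D - t^2 * (h \<bullet> L u)\<bar> + \<bar>D - t^2 * (u \<bullet> L h)\<bar>" by (rule abs_triangle_ineq4)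
    also have "\<dots> \<le> t^2 * e * (norm h + 2 * norm u) * norm u + t^2 * e * (norm u + 2 * norm h) * norm h"
      using h1' h2' by linarith
    also have "\<dots> = t^2 * (e * K)" by (simp add: K_def algebra_simps)
    finally show ?thesis using t0 by simp
  qed
  then show ?thesis
  proof -
    assume H: "\<And>e. e > 0 \<Longrightarrow> \<bar>u \<bullet> L h - h \<bullet> L u\<bar> \<le> e * K"
    show ?thesis
    proof (rule ccontr)
      assume ne: "u \<bullet> L h \<noteq> h \<bullet> L u"
      define d where "d = \<bar>u \<bullet> L h - h \<bullet> L u\<bar>"
      have dpos: "d > 0" using ne by (simp add: d_def)
      have "d \<le> (d / (2 * (K + 1))) * K" using H[of "d / (2 * (K + 1))"] dpos Knn by (simp add: d_def)
      also have "\<dots> < d"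
      proof -
        have "K * d \<ge> 0" using dpos Knn by simp
        then have "0 < K * d + d * 2" using dpos by linarith
        then show ?thesis using dpos Knn by (simp add: field_simps)
      qed
      finally show False by simp
    qed
  qed
qed

lemma sym_from_inner:
  fixes A :: "real^'n^'n"
  assumes "\<And>u v. u \<bullet> (A *v v) = v \<bullet> (A *v u)"
  shows "transpose A = A"
proof -
  have e: "A $ i $ j = axis i 1 \<bullet> (A *v axis j 1)" for i j
    by (simp add: matrix_vector_mult_basis inner_axis' column_def)
  have "transpose A $ i $ j = A $ i $ j" for i j
  proof -
    have "transpose A $ i $ j = A $ j $ i" by (simp add: transpose_def)
    also have "\<dots> = axis j 1 \<bullet> (A *v axis i 1)" by (rule e)
    also have "\<dots> = axis i 1 \<bullet> (A *v axis j 1)" by (rule assms)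
    also have "\<dots> = A $ i $ j" by (rule e[symmetric])
    finally show ?thesis .
  qed
  then show ?thesis by (simp add: vec_eq_iff)
qed

lemma bl_mat_vec: "bounded_linear (\<lambda>A::real^'n^'m. A *v c)"
proof -
  have "linear (\<lambda>A::real^'n^'m. A *v c)"
    by (rule linearI) (simp_all add: matrix_vector_mult_add_rdistrib scaleR_matrix_vector_assoc)
  then show ?thesis by (simp add: linear_conv_bounded_linear)
qed

lemma bl_entry: "bounded_linear (\<lambda>A::real^'n^'m. A $ i $ j)"
proof -
  have "linear (\<lambda>A::real^'n^'m. A $ i $ j)"
    by (rule linearI) simp_all
  then show ?thesis by (simp add: linear_conv_bounded_linear)
qed

locale lhscb =
  fixes K :: "(real^'n) set" and f :: "real^'n \<Rightarrow> real" and g :: "real^'n \<Rightarrow> real^'n"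
    and H :: "real^'n \<Rightarrow> real^'n^'n" and H' :: "real^'n \<Rightarrow> real^'n \<Rightarrow> real^'n^'n" and \<nu> :: real
  assumes pc: "proper_cone K"
    and df: "\<forall>x\<in>interior K. (f has_derivative (\<lambda>h. g x \<bullet> h)) (at x)"
    and dg: "\<forall>x\<in>interior K. (g has_derivative (\<lambda>h. H x *v h)) (at x)"
    and dH: "\<forall>x\<in>interior K. (H has_derivative H' x) (at x)"
    and sc: "\<forall>x\<in>interior K. \<forall>h. \<bar>h \<bullet> (H' x h *v h)\<bar> \<le> 2 * (h \<bullet> (H x *v h)) powr (3/2)"
    and scvx: "strictly_convex_on (interior K) f"
    and bar: "\<forall>p\<in>frontier K. filterlim f at_top (at p within interior K)"
    and inv: "\<forall>x\<in>interior K. invertible (H x)"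
    and hom: "\<forall>x\<in>interior K. \<forall>t>0. f (t *\<^sub>R x) = f x - \<nu> * ln t"
begin

lemma K_closed: "closed K" and K_convex: "convex K" and K_cone: "cone K"
  and U_ne: "interior K \<noteq> {}"
  using pc by (auto simp: proper_cone_def)

lemma U_open: "open (interior K)" by simp
lemma U_convex: "convex (interior K)" using K_convex convex_interior by blast

lemma K_add: assumes "a \<in> K" "b \<in> K" shows "a + b \<in> K"
proof -
  have "(1/2) *\<^sub>R a + (1/2) *\<^sub>R b \<in> K" using convexD[OF K_convex assms] by simp
  then have "2 *\<^sub>R ((1/2) *\<^sub>R a + (1/2) *\<^sub>R b) \<in> K" using K_cone by (simp add: cone_def)
  then show ?thesis by (simp add: scaleR_add_right)
qed

lemma U_add: assumes "a \<in> interior K" "b \<in> K" shows "a + b \<in> interior K"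
proof -
  obtain e where e: "e > 0" "ball a e \<subseteq> K" using assms(1) mem_interior by blast
  have "ball (a + b) e \<subseteq> K"
  proof
    fix v assume "v \<in> ball (a + b) e"
    then have "v - b \<in> ball a e" by (simp add: dist_norm algebra_simps)
    then have "v - b \<in> K" using e by blast
    from K_add[OF this assms(2)] show "v \<in> K" by simp
  qed
  then show ?thesis using e mem_interior by blast
qed

lemma U_scale: assumes "a \<in> interior K" "t > 0" shows "t *\<^sub>R a \<in> interior K"
proof -
  obtain e where e: "e > 0" "ball a e \<subseteq> K" using assms(1) mem_interior by blast
  have "ball (t *\<^sub>R a) (t * e) \<subseteq> K"
  proof
    fix v assume v: "v \<in> ball (t *\<^sub>R a) (t * e)"
    have "dist a ((1/t) *\<^sub>R v) = dist (t *\<^sub>R a) v / t"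
    proof -
      have "a - (1/t) *\<^sub>R v = (1/t) *\<^sub>R (t *\<^sub>R a - v)" using assms(2) by (simp add: algebra_simps)
      then show ?thesis using assms(2) by (simp add: dist_norm)
    qed
    also have "\<dots> < e" using v assms(2) by (simp add: field_simps)
    finally have "(1/t) *\<^sub>R v \<in> K" using e by auto
    have cc: "\<And>x c. x \<in> K \<Longrightarrow> c \<ge> 0 \<Longrightarrow> c *\<^sub>R x \<in> K" using K_cone by (simp add: cone_def)
    have "t *\<^sub>R ((1/t) *\<^sub>R v) \<in> K" using cc[OF \<open>(1/t) *\<^sub>R v \<in> K\<close>, of t] assms(2) by simp
    then show "v \<in> K" using assms(2) by simp
  qed
  moreover have "t * e > 0" using e assms by simp
  ultimately show ?thesis using mem_interior by blast
qed

lemma df': "x \<in> interior K \<Longrightarrow> (f has_derivative (\<lambda>h. g x \<bullet> h)) (at x)" using df by blast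
lemma dg': "x \<in> interior K \<Longrightarrow> (g has_derivative (\<lambda>h. H x *v h)) (at x)" using dg by blast
lemma dH': "x \<in> interior K \<Longrightarrow> (H has_derivative H' x) (at x)" using dH by blast

lemma H_sym: assumes "x \<in> interior K" shows "transpose (H x) = H x"
proof (rule sym_from_inner)
  fix u v
  show "u \<bullet> (H x *v v) = v \<bullet> (H x *v u)"
    using schwarz[OF U_open assms df' dg'[OF assms]] by blast
qed

lemma H'_lin: assumes "x \<in> interior K" shows "linear (H' x)"
  using dH'[OF assms] has_derivative_linear by blast

lemma H'_sym: assumes x: "x \<in> interior K" shows "transpose (H' x h) = H' x h"
proof -
  have "H' x h $ i $ j = H' x h $ j $ i" for i j
  proof -
    have d1: "((\<lambda>y. H y $ i $ j) has_derivative (\<lambda>h. H' x h $ i $ j)) (at x)"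
      using bounded_linear.has_derivative[OF bl_entry dH'[OF x]] .
    have d2: "((\<lambda>y. H y $ j $ i) has_derivative (\<lambda>h. H' x h $ j $ i)) (at x)"
      using bounded_linear.has_derivative[OF bl_entry dH'[OF x]] .
    have eq: "H y $ j $ i = H y $ i $ j" if "y \<in> interior K" for y
      using H_sym[OF that] by (metis transpose_def vec_lambda_beta)
    have d2': "((\<lambda>y. H y $ i $ j) has_derivative (\<lambda>h. H' x h $ j $ i)) (at x)"
      by (rule has_derivative_transform_within_open[OF d2 U_open x]) (use eq in auto)
    from has_derivative_unique[OF d1 d2'] show ?thesis by meson
  qed
  then show ?thesis by (simp add: vec_eq_iff transpose_def)
qed

lemma T_sym12: assumes x: "x \<in> interior K"
  shows "b \<bullet> (H' x a *v c) = a \<bullet> (H' x b *v c)"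
proof -
  have dpsi: "((\<lambda>z. g z \<bullet> c) has_derivative (\<lambda>h. (H w *v c) \<bullet> h)) (at w)" if w: "w \<in> interior K" for w
  proof -
    have d: "((\<lambda>z. g z \<bullet> c) has_derivative (\<lambda>h. (H w *v h) \<bullet> c)) (at w)"
      using bounded_linear.has_derivative[OF bounded_linear_inner_left dg'[OF w]] .
    have "(\<lambda>h. (H w *v h) \<bullet> c) = (\<lambda>h. (H w *v c) \<bullet> h)"
      using sym_inner[OF H_sym[OF w]] by (auto simp: fun_eq_iff inner_commute)
    then show ?thesis using d by simp
  qed
  have dG: "((\<lambda>z. H z *v c) has_derivative (\<lambda>h. H' x h *v c)) (at x)"
    using bounded_linear.has_derivative[OF bl_mat_vec dH'[OF x]] .
  show ?thesis using schwarz[OF U_open x dpsi dG] by blast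
qed

lemma sc': "x \<in> interior K \<Longrightarrow> \<bar>h \<bullet> (H' x h *v h)\<bar> \<le> 2 * (h \<bullet> (H x *v h)) powr (3/2)"
  using sc by blast

lemma convex_f: "convex_on (interior K) f"
proof (rule convex_onI)
  show "convex (interior K)" by (rule U_convex)
  fix t :: real and x y assume t: "0 < t" "t < 1" and xy: "x \<in> interior K" "y \<in> interior K"
  show "f ((1 - t) *\<^sub>R x + t *\<^sub>R y) \<le> (1 - t) * f x + t * f y"
  proof (cases "x = y")
    case True
    have "(1 - t) *\<^sub>R x + t *\<^sub>R x = x" by (simp add: scaleR_left_distrib[symmetric])
    moreover have "(1 - t) * f x + t * f x = f x" by (simp add: algebra_simps)
    ultimately show ?thesis by (simp add: True)
  next
    case False
    have "f ((1 - t) *\<^sub>R x + t *\<^sub>R y) < (1 - t) * f x + t * f y"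
      using scvx t xy False unfolding strictly_convex_on_def by blast
    then show ?thesis by simp
  qed
qed

lemma tangent:
  assumes x: "x \<in> interior K" and y: "y \<in> interior K"
  shows "f y \<ge> f x + g x \<bullet> (y - x)"
proof -
  define d where "d = y - x"
  define A where "A = {t::real. x + t *\<^sub>R d \<in> interior K}"
  define \<phi> where "\<phi> t = f (x + t *\<^sub>R d)" for t
  have cA: "convex A"
  proof (rule convexI)
    fix s t u v :: real assume st: "s \<in> A" "t \<in> A" and uv: "0 \<le> u" "0 \<le> v" "u + v = 1"
    have "u *\<^sub>R (x + s *\<^sub>R d) + v *\<^sub>R (x + t *\<^sub>R d) = (u + v) *\<^sub>R x + (u * s + v * t) *\<^sub>R d"
      by (simp add: algebra_simps)
    then have "x + (u * s + v * t) *\<^sub>R d = u *\<^sub>R (x + s *\<^sub>R d) + v *\<^sub>R (x + t *\<^sub>R d)"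
      using uv by simp
    also have "\<dots> \<in> interior K" using convexD[OF U_convex] st uv by (simp add: A_def)
    finally show "u *\<^sub>R s + v *\<^sub>R t \<in> A" by (simp add: A_def)
  qed
  have oA: "open A"
  proof -
    have "continuous_on UNIV (\<lambda>t::real. x + t *\<^sub>R d)" by (intro continuous_intros)
    then have "open ((\<lambda>t. x + t *\<^sub>R d) -` interior K \<inter> UNIV)"
      using continuous_on_open_vimage[OF open_UNIV] U_open by blast
    then show ?thesis by (simp add: A_def vimage_def)
  qed
  have 0: "0 \<in> interior A" using oA x by (simp add: A_def interior_open)
  have 1: "1 \<in> A" using y by (simp add: A_def d_def)
  have cvx: "convex_on A \<phi>"
  proof (rule convex_onI[OF _ cA])
    fix s t u :: real assume u: "0 < s" "s < 1" and tu: "t \<in> A" "u \<in> A"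
    have "(1 - s) *\<^sub>R (x + t *\<^sub>R d) + s *\<^sub>R (x + u *\<^sub>R d) = ((1 - s) + s) *\<^sub>R x + ((1 - s) * t + s * u) *\<^sub>R d"
      by (simp add: algebra_simps)
    then have "x + ((1 - s) * t + s * u) *\<^sub>R d = (1 - s) *\<^sub>R (x + t *\<^sub>R d) + s *\<^sub>R (x + u *\<^sub>R d)"
      by simp
    then have "\<phi> ((1 - s) *\<^sub>R t + s *\<^sub>R u) = f ((1 - s) *\<^sub>R (x + t *\<^sub>R d) + s *\<^sub>R (x + u *\<^sub>R d))"
      by (simp add: \<phi>_def)
    also have "\<dots> \<le> (1 - s) * f (x + t *\<^sub>R d) + s * f (x + u *\<^sub>R d)"
      using convex_onD[OF convex_f, of s] u tu by (simp add: A_def)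
    finally show "\<phi> ((1 - s) *\<^sub>R t + s *\<^sub>R u) \<le> (1 - s) * \<phi> t + s * \<phi> u" by (simp add: \<phi>_def)
  qed
  have der: "(\<phi> has_field_derivative (g x \<bullet> d)) (at 0 within A)"
  proof -
    have "(\<phi> has_field_derivative (g x \<bullet> d)) (at 0)"
      unfolding \<phi>_def by (rule line_real_deriv) (simp add: df'[OF x])
    then show ?thesis by (rule has_field_derivative_at_within)
  qed
  have "\<phi> 1 - \<phi> 0 \<ge> (g x \<bullet> d) * (1 - 0)"
    by (rule convex_on_imp_above_tangent[OF cvx convex_connected[OF cA] 0 1 der])
  then show ?thesis by (simp add: \<phi>_def d_def)
qed

lemma H_psd: assumes x: "x \<in> interior K" shows "0 \<le> h \<bullet> (H x *v h)"
proof (rule ccontr)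
  assume "\<not> ?thesis"
  then have neg: "(H x *v h) \<bullet> h < 0" by (simp add: inner_commute)
  define \<phi> where "\<phi> s = g (x + s *\<^sub>R h) \<bullet> h" for s
  have "(g has_derivative (*v) (H x)) (at (x + 0 *\<^sub>R h))" using dg'[OF x] by simp
  from line_real_deriv_lin[OF this bounded_linear_inner_left]
  have "(\<phi> has_real_derivative ((H x *v h) \<bullet> h)) (at 0)"
    unfolding \<phi>_def by simp
  from DERIV_neg_dec_right[OF this neg] obtain d where d: "d > 0" "\<And>s. s > 0 \<Longrightarrow> s < d \<Longrightarrow> \<phi> 0 > \<phi> (0 + s)"
    by blast
  obtain \<rho> where rho: "\<rho> > 0" "ball x \<rho> \<subseteq> interior K" using x U_open open_contains_ball by blast
  define s where "s = min (d/2) (\<rho> / (2 * (norm h + 1)))"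
  have "\<rho> / (2 * (norm h + 1)) > 0" using rho by (simp add: add_nonneg_pos)
  then have s0: "s > 0" using d by (simp add: s_def)
  have sd: "s < d" using d by (simp add: s_def)
  have "norm (s *\<^sub>R h) < \<rho>"
  proof -
    have "norm (s *\<^sub>R h) = s * norm h" using s0 by simp
    also have "\<dots> \<le> (\<rho> / (2 * (norm h + 1))) * norm h"
      by (rule mult_right_mono) (auto simp: s_def)
    also have "\<dots> < \<rho>"
    proof -
      have p: "2 * (norm h + 1) > 0" by (simp add: add_nonneg_pos)
      have n: "norm h < 2 * (norm h + 1)" using norm_ge_zero[of h] by (smt (verit))
      have "\<rho> * norm h < \<rho> * (2 * (norm h + 1))" using mult_strict_left_mono[OF n rho(1)] .
      then have "\<rho> * norm h / (2 * (norm h + 1)) < \<rho>" using p by (simp add: pos_divide_less_eq)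
      then show ?thesis by simp
    qed
    finally show ?thesis .
  qed
  then have y: "x + s *\<^sub>R h \<in> interior K" using rho dist_add_self[of x] by auto
  have t1: "f (x + s *\<^sub>R h) \<ge> f x + g x \<bullet> (s *\<^sub>R h)" using tangent[OF x y] by simp
  have t2: "f x \<ge> f (x + s *\<^sub>R h) + g (x + s *\<^sub>R h) \<bullet> (- (s *\<^sub>R h))" using tangent[OF y x] by simp
  have "s * (\<phi> s - \<phi> 0) \<ge> 0" using t1 t2 by (simp add: \<phi>_def algebra_simps)
  then have "\<phi> s \<ge> \<phi> 0" using s0 by (simp add: zero_le_mult_iff)
  then show False using d(2)[OF s0 sd] by simp
qed

lemma H_pd: assumes x: "x \<in> interior K" and h: "h \<noteq> 0" shows "0 < h \<bullet> (H x *v h)"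
proof (rule ccontr)
  assume "\<not> ?thesis"
  then have z: "h \<bullet> (H x *v h) = 0" using H_psd[OF x, of h] by simp
  have "(u \<bullet> (H x *v h))^2 \<le> 0" for u
    using cs_psd[OF H_sym[OF x] H_psd[OF x], of u h] z by simp
  then have "(H x *v h) \<bullet> (H x *v h) = 0"
    using zero_le_power2[of "(H x *v h) \<bullet> (H x *v h)"] by (simp del: zero_le_power2)
  then have "H x *v h = 0" by simp
  then have "h = 0" using inv_mv(2)[of "H x" h] inv x by simp
  then show False using h by simp
qed

lemma trilin: assumes x: "x \<in> interior K"
  shows "\<bar>b \<bullet> (H' x a *v b)\<bar> \<le> 2 * sqrt (a \<bullet> (H x *v a)) * (b \<bullet> (H x *v b))"
  by (rule trilinear_bound[OF H_sym[OF x] H_pd[OF x] H'_lin[OF x] T_sym12[OF x] H'_sym[OF x] sc'[OF x]])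

end

lemma powr32: "(q::real) \<ge> 0 \<Longrightarrow> q powr (3/2) = q * sqrt q"
proof -
  assume q: "q \<ge> 0"
  show ?thesis
  proof (cases "q = 0")
    case True then show ?thesis by simp
  next
    case False
    then have "q > 0" using q by simp
    have "q powr (3/2) = q powr (1 + 1/2)" by (rule arg_cong[where f="\<lambda>e. q powr e"]) simp
    also have "\<dots> = q powr 1 * q powr (1/2)" by (rule powr_add)
    also have "\<dots> = q * sqrt q" using \<open>q > 0\<close> by (simp add: powr_half_sqrt)
    finally show ?thesis .
  qed
qed

context lhscb
begin

lemma g_x: assumes x: "x \<in> interior K" shows "g x \<bullet> x = - \<nu>"
proof -
  have "(f has_derivative (\<lambda>h. g x \<bullet> h)) (at (0 + 1 *\<^sub>R x))" using df'[OF x] by simp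
  from line_real_deriv[OF this]
  have d1: "((\<lambda>t. f (t *\<^sub>R x)) has_real_derivative (g x \<bullet> x)) (at 1)" by simp
  have d2: "((\<lambda>t. f x - \<nu> * ln t) has_real_derivative (- \<nu>)) (at 1)"
    by (auto intro!: derivative_eq_intros)
  have d2': "((\<lambda>t. f (t *\<^sub>R x)) has_real_derivative (- \<nu>)) (at 1)"
    by (rule has_field_derivative_transform_within_open[OF d2, of "{0<..}"]) (use hom x in auto)
  show ?thesis using DERIV_unique[OF d1 d2'] .
qed

lemma Hx_x: assumes x: "x \<in> interior K" shows "H x *v x = - g x"
proof -
  have d1: "((\<lambda>z. g z \<bullet> z) has_derivative (\<lambda>h. g x \<bullet> h + (H x *v h) \<bullet> x)) (at x)"
    by (rule has_derivative_inner[OF dg'[OF x] has_derivative_ident, simplified])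
  have d0: "((\<lambda>z. - \<nu>) has_derivative (\<lambda>h. 0)) (at x)" by simp
  have d2: "((\<lambda>z. g z \<bullet> z) has_derivative (\<lambda>h. 0)) (at x)"
    by (rule has_derivative_transform_within_open[OF d0 U_open x]) (use g_x in auto)
  have eq: "(\<lambda>h. g x \<bullet> h + (H x *v h) \<bullet> x) = (\<lambda>h. 0)" using has_derivative_unique[OF d1 d2] .
  define w where "w = H x *v x + g x"
  have "g x \<bullet> w + (H x *v w) \<bullet> x = 0" using fun_cong[OF eq, of w] by simp
  moreover have "(H x *v w) \<bullet> x = w \<bullet> (H x *v x)"
    using sym_inner[OF H_sym[OF x], of x w] by (simp add: inner_commute)
  ultimately have "w \<bullet> w = 0" by (simp add: w_def inner_add_left inner_add_right inner_commute)
  then have "w = 0" by simp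
  then show ?thesis by (simp add: w_def eq_neg_iff_add_eq_0)
qed

lemma Hinv_g: assumes x: "x \<in> interior K" shows "matrix_inv (H x) *v g x = - x"
proof -
  have "H x *v (- x) = - (H x *v x)" by (rule linear_neg[OF matrix_vector_mul_linear])
  also have "\<dots> = g x" using Hx_x[OF x] by simp
  finally have "H x *v (- x) = g x" .
  then show ?thesis using inv_mv(2)[of "H x" "-x"] inv x by simp
qed

lemma nu_dual: assumes x: "x \<in> interior K" shows "g x \<bullet> (matrix_inv (H x) *v g x) = \<nu>"
  using Hinv_g[OF x] g_x[OF x] by simp

lemma nu_nonneg: "\<nu> \<ge> 0"
proof -
  obtain x where x: "x \<in> interior K" using U_ne by blast
  have "x \<bullet> (H x *v x) = \<nu>" using Hx_x[OF x] g_x[OF x] by (simp add: inner_commute)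
  then show ?thesis using H_psd[OF x, of x] by simp
qed

lemma g_rec_U: assumes y: "y \<in> interior K" and z: "z \<in> interior K" shows "g y \<bullet> z \<le> 0"
proof (rule ccontr)
  assume "\<not> ?thesis"
  then have a: "g y \<bullet> z > 0" by simp
  define C where "C = max (f y) (f z)"
  have bnd: "t * (g y \<bullet> z) \<le> C - f y" if t: "t > 0" for t
  proof -
    define w where "w = (1 - t/(1+t)) *\<^sub>R y + (t/(1+t)) *\<^sub>R z"
    have t01: "0 \<le> t/(1+t)" "t/(1+t) \<le> 1" using t by auto
    have wU: "w \<in> interior K" unfolding w_def using convexD[OF U_convex y z, of "1 - t/(1+t)" "t/(1+t)"] t01 by simp
    have "f w \<le> (1 - t/(1+t)) * f y + (t/(1+t)) * f z"
      unfolding w_def using convex_onD[OF convex_f t01 y z] .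
    also have "\<dots> \<le> (1 - t/(1+t)) * C + (t/(1+t)) * C"
      using t01 by (intro add_mono mult_left_mono) (auto simp: C_def)
    also have "\<dots> = C" by (simp add: algebra_simps)
    finally have fw: "f w \<le> C" .
    have yw: "y + t *\<^sub>R z = (1 + t) *\<^sub>R w"
    proof -
      have "(1 + t) *\<^sub>R w = ((1 + t) * (1 - t/(1+t))) *\<^sub>R y + ((1+t) * (t/(1+t))) *\<^sub>R z"
        by (simp add: w_def scaleR_add_right)
      also have "(1 + t) * (1 - t/(1+t)) = 1" using t by (simp add: field_simps)
      also have "(1 + t) * (t/(1+t)) = t" using t by (simp add: field_simps)
      finally show ?thesis by simp
    qed
    have "f (y + t *\<^sub>R z) = f w - \<nu> * ln (1 + t)" using hom wU t yw by simp
    also have "\<dots> \<le> f w" using nu_nonneg t by simp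
    finally have up: "f (y + t *\<^sub>R z) \<le> C" using fw by simp
    have yz: "y + t *\<^sub>R z \<in> interior K" using yw wU U_scale t by simp
    have "f (y + t *\<^sub>R z) \<ge> f y + g y \<bullet> (t *\<^sub>R z)" using tangent[OF y yz] by simp
    then show ?thesis using up by simp
  qed
  define t where "t = (\<bar>C - f y\<bar> + 1) / (g y \<bullet> z)"
  have "t > 0" using a by (simp add: t_def add_nonneg_pos)
  from bnd[OF this] have "\<bar>C - f y\<bar> + 1 \<le> C - f y" using a by (simp add: t_def)
  then show False by simp
qed

lemma g_rec: assumes y: "y \<in> interior K" and z: "z \<in> K" shows "g y \<bullet> z \<le> 0"
proof (rule ccontr)
  assume "\<not> ?thesis"
  then have a: "g y \<bullet> z > 0" by simp
  define e where "e = (g y \<bullet> z) / (2 * (\<nu> + 1))"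
  have e0: "e > 0" using a nu_nonneg by (simp add: e_def add_nonneg_pos)
  have "e *\<^sub>R y + z \<in> interior K" using U_add[OF U_scale[OF y e0] z] .
  then have "g y \<bullet> (e *\<^sub>R y + z) \<le> 0" by (rule g_rec_U[OF y])
  then have "e * (g y \<bullet> y) + g y \<bullet> z \<le> 0" by (simp add: inner_add_right)
  then have "g y \<bullet> z \<le> e * \<nu>" using g_x[OF y] by simp
  also have "\<dots> < g y \<bullet> z"
  proof -
    have "e * \<nu> = (g y \<bullet> z) * (\<nu> / (2 * (\<nu> + 1)))" by (simp add: e_def)
    also have "\<nu> / (2 * (\<nu> + 1)) < 1" using nu_nonneg by (simp add: field_simps)
    then have "(g y \<bullet> z) * (\<nu> / (2 * (\<nu> + 1))) < (g y \<bullet> z) * 1" using a by (intro mult_strict_left_mono) auto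
    finally show ?thesis by simp
  qed
  finally show False by simp
qed

end

context lhscb
begin

lemma u_lip:
  assumes seg: "\<And>s. a \<le> s \<Longrightarrow> s \<le> b \<Longrightarrow> p + s *\<^sub>R z \<in> interior K"
    and z: "z \<noteq> 0" and t: "a \<le> t" "t \<le> b"
  shows "\<bar>1 / sqrt (z \<bullet> (H (p + t *\<^sub>R z) *v z)) - 1 / sqrt (z \<bullet> (H (p + a *\<^sub>R z) *v z))\<bar> \<le> t - a"
proof -
  define q where "q s = z \<bullet> (H (p + s *\<^sub>R z) *v z)" for s
  define q' where "q' s = z \<bullet> (H' (p + s *\<^sub>R z) z *v z)" for s
  define u where "u s = inverse (sqrt (q s))" for s
  define u' where "u' s = - q' s / (2 * q s * sqrt (q s))" for s
  have qpos: "q s > 0" if "a \<le> s" "s \<le> b" for s using H_pd[OF seg[OF that] z] by (simp add: q_def)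
  have blq: "bounded_linear (\<lambda>M::real^'n^'n. z \<bullet> (M *v z))"
    using bounded_linear_compose[OF bounded_linear_inner_right bl_mat_vec] .
  have dq: "DERIV q s :> q' s" if "a \<le> s" "s \<le> b" for s
    unfolding q_def q'_def using line_real_deriv_lin[OF dH'[OF seg[OF that]] blq] .
  have du: "DERIV u s :> u' s" if s: "a \<le> s" "s \<le> b" for s
  proof -
    have qp: "q s > 0" using qpos[OF s] .
    have d1: "DERIV (\<lambda>s. sqrt (q s)) s :> inverse (sqrt (q s)) / 2 * q' s"
      using DERIV_chain2[OF DERIV_real_sqrt[OF qp] dq[OF s]] .
    have "sqrt (q s) \<noteq> 0" using qp by simp
    from DERIV_inverse_fun[OF d1 this]
    have d2: "DERIV u s :> - (inverse (sqrt (q s)) / 2 * q' s * inverse (sqrt (q s) ^ Suc (Suc 0)))"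
      unfolding u_def .
    have "- (inverse (sqrt (q s)) / 2 * q' s * inverse (sqrt (q s) ^ Suc (Suc 0))) = u' s"
      using qp by (simp add: u'_def field_simps)
    then show ?thesis using d2 by simp
  qed
  have u'b: "\<bar>u' s\<bar> \<le> 1" if s: "a \<le> s" "s \<le> b" for s
  proof -
    have qp: "q s > 0" using qpos[OF s] .
    have "\<bar>q' s\<bar> \<le> 2 * (q s) powr (3/2)" using sc'[OF seg[OF s], of z] by (simp add: q_def q'_def)
    also have "\<dots> = 2 * q s * sqrt (q s)" using qp by (simp add: powr32)
    finally have b: "\<bar>q' s\<bar> \<le> 2 * q s * sqrt (q s)" .
    have den: "2 * q s * sqrt (q s) > 0" using qp by simp
    have "\<bar>u' s\<bar> = \<bar>q' s\<bar> / (2 * q s * sqrt (q s))" using den by (simp add: u'_def abs_div)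
    also have "\<dots> \<le> 1" using b den by simp
    finally show ?thesis .
  qed
  have m1: "u t - t \<le> u a - a"
  proof (rule DERIV_nonpos_imp_nonincreasing[OF t(1)])
    fix s assume s: "a \<le> s" "s \<le> t"
    have sb: "s \<le> b" using s t by simp
    show "\<exists>y. DERIV (\<lambda>s. u s - s) s :> y \<and> y \<le> 0"
      using DERIV_diff[OF du[OF s(1) sb] DERIV_ident] u'b[OF s(1) sb] by auto
  qed
  have m2: "u a + a \<le> u t + t"
  proof (rule DERIV_nonneg_imp_nondecreasing[OF t(1)])
    fix s assume s: "a \<le> s" "s \<le> t"
    have sb: "s \<le> b" using s t by simp
    show "\<exists>y. DERIV (\<lambda>s. u s + s) s :> y \<and> y \<ge> 0"
      using DERIV_add[OF du[OF s(1) sb] DERIV_ident] u'b[OF s(1) sb] by auto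
  qed
  show ?thesis using m1 m2 by (simp add: u_def q_def divide_inverse abs_le_iff)
qed

lemma grad_lower:
  assumes y: "y \<in> interior K" and z: "z \<in> K"
  shows "sqrt (z \<bullet> (H y *v z)) \<le> - (g y \<bullet> z)"
proof (cases "z = 0")
  case True then show ?thesis by simp
next
  case False
  have seg: "y + s *\<^sub>R z \<in> interior K" if "0 \<le> s" for s
  proof -
    have "s *\<^sub>R z \<in> K" using K_cone z that by (simp add: cone_def)
    then show ?thesis using U_add[OF y] by simp
  qed
  define q where "q s = z \<bullet> (H (y + s *\<^sub>R z) *v z)" for s
  have qpos: "q s > 0" if "0 \<le> s" for s using H_pd[OF seg[OF that] False] by (simp add: q_def)
  define u0 where "u0 = 1 / sqrt (q 0)"
  have u0: "u0 > 0" using qpos[of 0] by (simp add: u0_def)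
  have qlow: "q T \<ge> 1 / (u0 + T)^2" if T: "T \<ge> 0" for T
  proof -
    have "\<bar>1 / sqrt (q T) - 1 / sqrt (q 0)\<bar> \<le> T - 0"
      using u_lip[of 0 T y z T] seg False T by (simp add: q_def)
    then have "1 / sqrt (q T) \<le> u0 + T" by (simp add: u0_def abs_le_iff)
    moreover have qT: "q T > 0" using qpos T by simp
    ultimately have "1 / (u0 + T) \<le> sqrt (q T)" using u0 T
      by (simp add: field_simps)
    then have "(1 / (u0 + T))^2 \<le> (sqrt (q T))^2"
      using u0 T by (intro power_mono) auto
    then show ?thesis using qT by (simp add: power_divide)
  qed
  define \<phi> where "\<phi> s = g (y + s *\<^sub>R z) \<bullet> z" for s
  have dphi: "DERIV \<phi> s :> q s" if "0 \<le> s" for s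
  proof -
    from line_real_deriv_lin[OF dg'[OF seg[OF that]] bounded_linear_inner_left, of z]
    have D: "((\<lambda>t. g (y + t *\<^sub>R z) \<bullet> z) has_real_derivative ((H (y + s *\<^sub>R z) *v z) \<bullet> z)) (at s)"
      by simp
    have eq: "(H (y + s *\<^sub>R z) *v z) \<bullet> z = q s" by (simp add: q_def inner_commute)
    have fe: "\<phi> = (\<lambda>t. g (y + t *\<^sub>R z) \<bullet> z)" by (simp add: \<phi>_def[abs_def])
    show ?thesis using D unfolding eq fe .
  qed
  have key: "\<phi> 0 + 1 / u0 \<le> 1 / (u0 + T)" if T: "T \<ge> 0" for T
  proof -
    have "\<phi> 0 + 1 / (u0 + 0) \<le> \<phi> T + 1 / (u0 + T)"
    proof (rule DERIV_nonneg_imp_nondecreasing[OF T])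
      fix s assume s: "0 \<le> s" "s \<le> T"
      have "DERIV (\<lambda>s. 1 / (u0 + s)) s :> - 1 / (u0 + s)^2"
        using u0 s by (auto intro!: derivative_eq_intros simp: power2_eq_square field_simps)
      from DERIV_add[OF dphi[OF s(1)] this] qlow[OF s(1)]
      show "\<exists>y. DERIV (\<lambda>s. \<phi> s + 1 / (u0 + s)) s :> y \<and> y \<ge> 0" by auto
    qed
    moreover have "\<phi> T \<le> 0" using g_rec[OF seg[OF T] z] by (simp add: \<phi>_def)
    ultimately show ?thesis by simp
  qed
  have "- \<phi> 0 \<ge> 1 / u0"
  proof (rule ccontr)
    assume nt: "\<not> ?thesis"
    define d where "d = 1 / u0 + \<phi> 0"
    have d: "d > 0" using nt by (simp add: d_def)
    have "d \<le> 1 / (u0 + 1 / d)" using key[of "1/d"] d by (simp add: d_def)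
    also have "\<dots> < 1 / (1 / d)" using u0 d by (intro divide_strict_left_mono) (auto simp: add_pos_pos)
    also have "\<dots> = d" by simp
    finally show False by simp
  qed
  then show ?thesis using qpos[of 0] by (simp add: u0_def \<phi>_def q_def)
qed

lemma seg_conv:
  assumes x: "x \<in> interior K" and xt: "x + t *\<^sub>R h \<in> interior K" and s: "0 \<le> s" "s \<le> t"
  shows "x + s *\<^sub>R h \<in> interior K"
proof (cases "t = 0")
  case True then show ?thesis using s x by simp
next
  case False
  then have tp: "t > 0" using s by simp
  have "x + s *\<^sub>R h = (1 - s/t) *\<^sub>R x + (s/t) *\<^sub>R (x + t *\<^sub>R h)"
    using tp by (simp add: algebra_simps)
  also have "\<dots> \<in> interior K"
    using convexD[OF U_convex x xt, of "1 - s/t" "s/t"] s tp by simp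
  finally show ?thesis .
qed

lemma seg_q:
  assumes x: "x \<in> interior K" and xt: "x + t *\<^sub>R h \<in> interior K" and t: "0 \<le> t" "t \<le> 1"
    and r1: "sqrt (h \<bullet> (H x *v h)) < 1"
  shows "sqrt (h \<bullet> (H (x + t *\<^sub>R h) *v h)) \<le> sqrt (h \<bullet> (H x *v h)) / (1 - t * sqrt (h \<bullet> (H x *v h)))"
proof (cases "h = 0")
  case True then show ?thesis by simp
next
  case False
  define r where "r = sqrt (h \<bullet> (H x *v h))"
  have r0: "r > 0" using H_pd[OF x False] by (simp add: r_def)
  have tr: "t * r < 1" using t r1 r0 unfolding r_def by (smt (verit) mult_left_le_one_le)
  have qt: "h \<bullet> (H (x + t *\<^sub>R h) *v h) > 0" using H_pd[OF xt False] .
  have "\<bar>1 / sqrt (h \<bullet> (H (x + t *\<^sub>R h) *v h)) - 1 / sqrt (h \<bullet> (H (x + 0 *\<^sub>R h) *v h))\<bar> \<le> t - 0"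
    by (rule u_lip[of 0 t x h t]) (use seg_conv[OF x xt] False t in auto)
  then have "1 / r - t \<le> 1 / sqrt (h \<bullet> (H (x + t *\<^sub>R h) *v h))" by (simp add: r_def abs_le_iff)
  moreover have "1 / r - t = (1 - t * r) / r" using r0 by (simp add: field_simps)
  ultimately have "(1 - t * r) / r \<le> 1 / sqrt (h \<bullet> (H (x + t *\<^sub>R h) *v h))" by simp
  then have "sqrt (h \<bullet> (H (x + t *\<^sub>R h) *v h)) \<le> r / (1 - t * r)"
    using r0 tr qt by (simp add: field_simps)
  then show ?thesis by (simp add: r_def)
qed

end

context lhscb
begin

lemma seg_f_bound:
  assumes x: "x \<in> interior K" and h: "h \<noteq> 0" and r1: "sqrt (h \<bullet> (H x *v h)) < 1"
    and t: "0 \<le> t" "t \<le> 1" and xt: "x + t *\<^sub>R h \<in> interior K"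
  shows "f (x + t *\<^sub>R h) \<le> f x + \<bar>g x \<bullet> h\<bar> + (sqrt (h \<bullet> (H x *v h)) / (1 - sqrt (h \<bullet> (H x *v h))))^2"
proof -
  define r where "r = sqrt (h \<bullet> (H x *v h))"
  define C where "C = (r / (1 - r))^2"
  have r0: "r > 0" using H_pd[OF x h] by (simp add: r_def)
  have r1': "r < 1" using r1 by (simp add: r_def)
  have inU: "x + s *\<^sub>R h \<in> interior K" if "0 \<le> s" "s \<le> t" for s using seg_conv[OF x xt that] .
  define q where "q s = h \<bullet> (H (x + s *\<^sub>R h) *v h)" for s
  have qC: "q s \<le> C" if s: "0 \<le> s" "s \<le> t" for s
  proof -
    have "sqrt (q s) \<le> r / (1 - s * r)"
      using seg_q[OF x inU[OF s]] s t r1 by (simp add: q_def r_def)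
    also have "\<dots> \<le> r / (1 - r)"
    proof (rule divide_left_mono)
      show "1 - r \<le> 1 - s * r" using s t r0 by (simp add: mult_left_le_one_le)
      show "0 < (1 - s * r) * (1 - r)" using s t r0 r1' by (smt (verit) mult_left_le_one_le mult_pos_pos)
    qed (use r0 in simp)
    finally have "sqrt (q s) \<le> r / (1 - r)" .
    moreover have qn: "q s \<ge> 0" using H_psd[OF inU[OF s]] by (simp add: q_def)
    ultimately have "(sqrt (q s))^2 \<le> (r / (1 - r))^2" by (intro power_mono) auto
    then show ?thesis using qn by (simp add: C_def)
  qed
  define \<phi>1 where "\<phi>1 s = g (x + s *\<^sub>R h) \<bullet> h" for s
  define \<phi> where "\<phi> s = f (x + s *\<^sub>R h)" for s
  have dphi1: "DERIV \<phi>1 s :> q s" if "0 \<le> s" "s \<le> t" for s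
  proof -
    from line_real_deriv_lin[OF dg'[OF inU[OF that]] bounded_linear_inner_left, of h]
    have D: "((\<lambda>s. g (x + s *\<^sub>R h) \<bullet> h) has_real_derivative ((H (x + s *\<^sub>R h) *v h) \<bullet> h)) (at s)"
      by simp
    have eq: "(H (x + s *\<^sub>R h) *v h) \<bullet> h = q s" by (simp add: q_def inner_commute)
    have fe: "\<phi>1 = (\<lambda>s. g (x + s *\<^sub>R h) \<bullet> h)" by (simp add: \<phi>1_def[abs_def])
    show ?thesis using D unfolding eq fe .
  qed
  have dphi: "DERIV \<phi> s :> \<phi>1 s" if "0 \<le> s" "s \<le> t" for s
    unfolding \<phi>_def \<phi>1_def by (rule line_real_deriv) (use df' inU[OF that] in auto)
  have s1: "\<phi>1 s \<le> \<phi>1 0 + C * s" if s: "0 \<le> s" "s \<le> t" for s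
  proof -
    have "\<phi>1 s - C * s \<le> \<phi>1 0 - C * 0"
    proof (rule DERIV_nonpos_imp_nonincreasing[OF s(1)])
      fix \<sigma> assume \<sigma>: "0 \<le> \<sigma>" "\<sigma> \<le> s"
      have \<sigma>t: "\<sigma> \<le> t" using \<sigma> s by simp
      have "DERIV (\<lambda>\<sigma>. \<phi>1 \<sigma> - C * \<sigma>) \<sigma> :> q \<sigma> - C * 1"
        by (intro DERIV_diff dphi1[OF \<sigma>(1) \<sigma>t] DERIV_cmult DERIV_ident)
      then show "\<exists>y. DERIV (\<lambda>\<sigma>. \<phi>1 \<sigma> - C * \<sigma>) \<sigma> :> y \<and> y \<le> 0" using qC[OF \<sigma>(1) \<sigma>t] by auto
    qed
    then show ?thesis by simp
  qed
  have "\<phi> t - \<phi>1 0 * t - C / 2 * t^2 \<le> \<phi> 0 - \<phi>1 0 * 0 - C / 2 * 0^2"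
  proof (rule DERIV_nonpos_imp_nonincreasing[OF t(1)])
    fix \<sigma> assume \<sigma>: "0 \<le> \<sigma>" "\<sigma> \<le> t"
    have "DERIV (\<lambda>\<sigma>. \<phi> \<sigma> - \<phi>1 0 * \<sigma> - C / 2 * \<sigma>^2) \<sigma> :> \<phi>1 \<sigma> - \<phi>1 0 * 1 - C / 2 * (2 * \<sigma>)"
      by (intro DERIV_diff dphi[OF \<sigma>] DERIV_cmult DERIV_ident) (auto intro!: derivative_eq_intros)
    then show "\<exists>y. DERIV (\<lambda>\<sigma>. \<phi> \<sigma> - \<phi>1 0 * \<sigma> - C / 2 * \<sigma>^2) \<sigma> :> y \<and> y \<le> 0"
      using s1[OF \<sigma>] by auto
  qed
  then have "\<phi> t \<le> \<phi> 0 + \<phi>1 0 * t + C / 2 * t^2" by simp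
  also have "\<phi>1 0 * t \<le> \<bar>g x \<bullet> h\<bar>"
  proof -
    have "\<phi>1 0 * t \<le> \<bar>\<phi>1 0\<bar> * t" using t by (intro mult_right_mono) auto
    also have "\<dots> \<le> \<bar>\<phi>1 0\<bar> * 1" using t by (intro mult_left_mono) auto
    finally show ?thesis by (simp add: \<phi>1_def)
  qed
  also have "C / 2 * t^2 \<le> C"
  proof -
    have "t^2 \<le> 1" using t by (simp add: power_le_one)
    moreover have "C \<ge> 0" by (simp add: C_def)
    ultimately have "C * t^2 \<le> C * 1" by (intro mult_left_mono) auto
    then show ?thesis using \<open>C \<ge> 0\<close> by simp
  qed
  finally show ?thesis by (simp add: \<phi>_def C_def r_def)
qed

lemma dikin:
  assumes x: "x \<in> interior K" and r1: "sqrt (h \<bullet> (H x *v h)) < 1"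
  shows "x + h \<in> interior K"
proof (cases "h = 0")
  case True then show ?thesis using x by simp
next
  case hnz: False
  define B where "B = f x + \<bar>g x \<bullet> h\<bar> + (sqrt (h \<bullet> (H x *v h)) / (1 - sqrt (h \<bullet> (H x *v h))))^2"
  have fB: "f (x + t *\<^sub>R h) \<le> B" if "0 \<le> t" "t \<le> 1" "x + t *\<^sub>R h \<in> interior K" for t
    unfolding B_def by (rule seg_f_bound[OF x hnz r1 that])
  define S where "S = {t. 0 \<le> t \<and> t \<le> 1 \<and> x + t *\<^sub>R h \<in> interior K}"
  define T where "T = Sup S"
  have S0: "0 \<in> S" using x by (simp add: S_def)
  have Sne: "S \<noteq> {}" using S0 by blast
  have Sbdd: "bdd_above S" by (auto simp: S_def bdd_above_def)
  have T1: "T \<le> 1" unfolding T_def by (rule cSup_least[OF Sne]) (auto simp: S_def)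
  have upper: "t \<le> T" if "t \<in> S" for t unfolding T_def by (rule cSup_upper[OF that Sbdd])
  have nh: "norm h > 0" using hnz by simp
  obtain \<rho> where rho: "\<rho> > 0" "ball x \<rho> \<subseteq> interior K" using x U_open open_contains_ball by blast
  have T0: "T > 0"
  proof -
    define s0 where "s0 = min 1 (\<rho> / (2 * norm h))"
    have s0p: "s0 > 0" using rho nh by (simp add: s0_def)
    have "norm (s0 *\<^sub>R h) \<le> \<rho> / 2"
    proof -
      have "norm (s0 *\<^sub>R h) = s0 * norm h" using s0p by simp
      also have "\<dots> \<le> (\<rho> / (2 * norm h)) * norm h" by (intro mult_right_mono) (auto simp: s0_def)
      also have "\<dots> = \<rho> / 2" using nh by simp
      finally show ?thesis .
    qed
    then have "x + s0 *\<^sub>R h \<in> ball x \<rho>" using rho dist_add_self[of x] by simp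
    then have "s0 \<in> S" using rho s0p by (auto simp: S_def s0_def)
    then show ?thesis using upper s0p by force
  qed
  have below: "x + s *\<^sub>R h \<in> interior K" if sT: "0 \<le> s" "s < T" for s
  proof -
    obtain t where t: "t \<in> S" "s < t" using less_cSupD[OF Sne, of s] sT by (auto simp: T_def)
    then show ?thesis using seg_conv[OF x, of t h s] sT by (auto simp: S_def)
  qed
  show ?thesis
  proof (rule ccontr)
    assume nx: "x + h \<notin> interior K"
    define p where "p = x + T *\<^sub>R h"
    have pU: "p \<notin> interior K"
    proof
      assume pU: "p \<in> interior K"
      then have Tl: "T < 1" using nx T1 by (cases "T = 1") (auto simp: p_def)
      obtain \<rho>' where rho': "\<rho>' > 0" "ball p \<rho>' \<subseteq> interior K" using pU U_open open_contains_ball by blast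
      define T' where "T' = min 1 (T + \<rho>' / (2 * norm h))"
      have "T' > T" using Tl rho' nh by (simp add: T'_def)
      have "norm ((T' - T) *\<^sub>R h) < \<rho>'"
      proof -
        have "norm ((T' - T) *\<^sub>R h) = (T' - T) * norm h" using \<open>T' > T\<close> by simp
        also have "\<dots> \<le> (\<rho>' / (2 * norm h)) * norm h" by (intro mult_right_mono) (auto simp: T'_def)
        also have "\<dots> < \<rho>'" using nh rho' by simp
        finally show ?thesis .
      qed
      then have "p + (T' - T) *\<^sub>R h \<in> ball p \<rho>'" using dist_add_self[of p] by simp
      then have "x + T' *\<^sub>R h \<in> interior K" using rho' by (auto simp: p_def algebra_simps)
      then have "T' \<in> S" using T0 \<open>T' > T\<close> by (auto simp: S_def T'_def)
      then show False using upper \<open>T' > T\<close> by force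
    qed
    have lim: "((\<lambda>s. x + s *\<^sub>R h) \<longlongrightarrow> p) (at_left T)"
      unfolding p_def by (intro tendsto_intros)
    have evT: "eventually (\<lambda>s. s \<in> {0<..<T}) (at_left T)" using eventually_at_left_real[OF T0] .
    have ev: "eventually (\<lambda>s. x + s *\<^sub>R h \<in> interior K \<and> x + s *\<^sub>R h \<noteq> p) (at_left T)"
      using evT
    proof eventually_elim
      case (elim s)
      then have "x + s *\<^sub>R h \<in> interior K" using below by auto
      moreover have "x + s *\<^sub>R h \<noteq> p"
      proof
        assume "x + s *\<^sub>R h = p"
        then have "(s - T) *\<^sub>R h = 0" by (simp add: p_def algebra_simps)
        then show False using elim hnz by simp
      qed
      ultimately show ?case by simp
    qed
    have pK: "p \<in> K"
    proof (rule Lim_in_closed_set[OF K_closed _ _ lim])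
      show "eventually (\<lambda>s. x + s *\<^sub>R h \<in> K) (at_left T)"
        using ev by eventually_elim (use interior_subset in blast)
    qed simp
    have pF: "p \<in> frontier K" using pK pU K_closed by (simp add: frontier_def closure_closed)
    have fl: "filterlim f at_top (at p within interior K)" using bar pF by blast
    have fl2: "filterlim (\<lambda>s. x + s *\<^sub>R h) (at p within interior K) (at_left T)"
      unfolding filterlim_at using ev lim by blast
    have "filterlim (\<lambda>s. f (x + s *\<^sub>R h)) at_top (at_left T)" using filterlim_compose[OF fl fl2] .
    then have "eventually (\<lambda>s. B + 1 \<le> f (x + s *\<^sub>R h)) (at_left T)" unfolding filterlim_at_top by blast
    then have "eventually (\<lambda>s. B + 1 \<le> f (x + s *\<^sub>R h) \<and> s \<in> {0<..<T}) (at_left T)"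
      using evT by (rule eventually_conj)
    then obtain s where s: "B + 1 \<le> f (x + s *\<^sub>R h)" "s \<in> {0<..<T}"
      using eventually_happens[of _ "at_left T"] by auto
    have "f (x + s *\<^sub>R h) \<le> B" using fB[of s] s T1 below[of s] by auto
    then show False using s by simp
  qed
qed

end

lemma sqrt_cs2:
  fixes a1 a2 b1 b2 :: real
  assumes "a1 \<ge> 0" "a2 \<ge> 0" "b1 \<ge> 0" "b2 \<ge> 0"
  shows "sqrt a1 * sqrt b1 + sqrt a2 * sqrt b2 \<le> sqrt ((a1 + a2) * (b1 + b2))"
proof -
  define x1 where "x1 = sqrt a1"
  define x2 where "x2 = sqrt a2"
  define y1 where "y1 = sqrt b1"
  define y2 where "y2 = sqrt b2"
  have sq: "a1 = x1^2" "a2 = x2^2" "b1 = y1^2" "b2 = y2^2" using assms by (simp_all add: x1_def x2_def y1_def y2_def)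
  have id: "(x1^2 + x2^2) * (y1^2 + y2^2) = (x1 * y1 + x2 * y2)^2 + (x1 * y2 - x2 * y1)^2"
    by algebra
  have "(x1 * y1 + x2 * y2)^2 \<le> (x1^2 + x2^2) * (y1^2 + y2^2)"
    unfolding id by simp
  then have "x1 * y1 + x2 * y2 \<le> sqrt ((x1^2 + x2^2) * (y1^2 + y2^2))"
    by (rule real_le_rsqrt)
  then have "x1 * y1 + x2 * y2 \<le> sqrt ((a1 + a2) * (b1 + b2))" by (simp only: sq[symmetric])
  then show ?thesis by (simp only: x1_def x2_def y1_def y2_def)
qed

lemma cs_sqrt:
  fixes M :: "real^'n^'n"
  assumes sym: "transpose M = M" and psd: "\<And>v. 0 \<le> v \<bullet> (M *v v)"
  shows "\<bar>a \<bullet> (M *v b)\<bar> \<le> sqrt (a \<bullet> (M *v a)) * sqrt (b \<bullet> (M *v b))"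
proof -
  have "\<bar>a \<bullet> (M *v b)\<bar>^2 \<le> (a \<bullet> (M *v a)) * (b \<bullet> (M *v b))"
    using cs_psd[OF sym psd, of a b] by simp
  then have "\<bar>a \<bullet> (M *v b)\<bar> \<le> sqrt ((a \<bullet> (M *v a)) * (b \<bullet> (M *v b)))"
    by (rule real_le_rsqrt)
  then show ?thesis by (simp add: real_sqrt_mult)
qed

lemma bilin_bound:
  fixes M D :: "real^'n^'n"
  assumes symM: "transpose M = M" and psdM: "\<And>v. 0 \<le> v \<bullet> (M *v v)"
    and symD: "transpose D = D" and c: "c \<ge> 0"
    and bnd: "\<And>u. \<bar>u \<bullet> (D *v u)\<bar> \<le> c * (u \<bullet> (M *v u))"
  shows "\<bar>u \<bullet> (D *v v)\<bar> \<le> c * sqrt (u \<bullet> (M *v u)) * sqrt (v \<bullet> (M *v v))"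
proof -
  define P where "P = c *\<^sub>R M - D"
  define N where "N = c *\<^sub>R M + D"
  have Pv: "P *v w = c *\<^sub>R (M *v w) - D *v w" for w
    by (simp add: P_def matrix_vector_mult_diff_rdistrib scaleR_matrix_vector_assoc)
  have Nv: "N *v w = c *\<^sub>R (M *v w) + D *v w" for w
    by (simp add: N_def matrix_vector_mult_add_rdistrib scaleR_matrix_vector_assoc)
  have sM: "a \<bullet> (M *v b) = b \<bullet> (M *v a)" for a b by (rule sym_inner[OF symM])
  have sD: "a \<bullet> (D *v b) = b \<bullet> (D *v a)" for a b by (rule sym_inner[OF symD])
  have symP: "transpose P = P"
    by (rule sym_from_inner) (simp add: Pv inner_diff_right sM sD)
  have symN: "transpose N = N"
    by (rule sym_from_inner) (simp add: Nv inner_add_right sM sD)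
  have psdP: "0 \<le> w \<bullet> (P *v w)" for w using bnd[of w] by (simp add: Pv inner_diff_right abs_le_iff)
  have psdN: "0 \<le> w \<bullet> (N *v w)" for w using bnd[of w] by (simp add: Nv inner_add_right abs_le_iff)
  have e: "u \<bullet> (D *v v) = (u \<bullet> (N *v v) - u \<bullet> (P *v v)) / 2"
    by (simp add: Nv Pv inner_add_right inner_diff_right)
  have "\<bar>u \<bullet> (D *v v)\<bar> \<le> (\<bar>u \<bullet> (N *v v)\<bar> + \<bar>u \<bullet> (P *v v)\<bar>) / 2" unfolding e by simp
  also have "\<dots> \<le> (sqrt (u \<bullet> (N *v u)) * sqrt (v \<bullet> (N *v v)) + sqrt (u \<bullet> (P *v u)) * sqrt (v \<bullet> (P *v v))) / 2"
    using cs_sqrt[OF symN psdN, of u v] cs_sqrt[OF symP psdP, of u v] by simp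
  also have "\<dots> \<le> sqrt ((u \<bullet> (N *v u) + u \<bullet> (P *v u)) * (v \<bullet> (N *v v) + v \<bullet> (P *v v))) / 2"
    using sqrt_cs2[OF psdN[of u] psdP[of u] psdN[of v] psdP[of v]] by (intro divide_right_mono) auto
  also have "(u \<bullet> (N *v u) + u \<bullet> (P *v u)) = 2 * c * (u \<bullet> (M *v u))"
    by (simp add: Nv Pv inner_add_right inner_diff_right)
  also have "(v \<bullet> (N *v v) + v \<bullet> (P *v v)) = 2 * c * (v \<bullet> (M *v v))"
    by (simp add: Nv Pv inner_add_right inner_diff_right)
  also have "sqrt (2 * c * (u \<bullet> (M *v u)) * (2 * c * (v \<bullet> (M *v v)))) / 2
      = c * sqrt (u \<bullet> (M *v u)) * sqrt (v \<bullet> (M *v v))"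
  proof -
    have "2 * c * (u \<bullet> (M *v u)) * (2 * c * (v \<bullet> (M *v v))) = (2 * c)^2 * ((u \<bullet> (M *v u)) * (v \<bullet> (M *v v)))"
      by (simp add: power2_eq_square algebra_simps)
    then show ?thesis using c by (simp add: real_sqrt_mult)
  qed
  finally show ?thesis .
qed

lemma form_tri:
  fixes P :: "real^'n^'n"
  assumes sym: "transpose P = P" and psd: "\<And>v. 0 \<le> v \<bullet> (P *v v)"
  shows "sqrt ((a + b) \<bullet> (P *v (a + b))) \<le> sqrt (a \<bullet> (P *v a)) + sqrt (b \<bullet> (P *v b))"
proof -
  have "(a + b) \<bullet> (P *v (a + b)) = a \<bullet> (P *v a) + 2 * (a \<bullet> (P *v b)) + b \<bullet> (P *v b)"
    using quad_expand[OF sym, of a 1 b] by simp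
  also have "\<dots> \<le> a \<bullet> (P *v a) + 2 * (sqrt (a \<bullet> (P *v a)) * sqrt (b \<bullet> (P *v b))) + b \<bullet> (P *v b)"
    using cs_sqrt[OF sym psd, of a b] by simp
  also have "\<dots> = (sqrt (a \<bullet> (P *v a)) + sqrt (b \<bullet> (P *v b)))^2"
    using psd[of a] psd[of b] by (simp add: power2_eq_square algebra_simps)
  finally have "sqrt ((a + b) \<bullet> (P *v (a + b))) \<le> sqrt ((sqrt (a \<bullet> (P *v a)) + sqrt (b \<bullet> (P *v b)))^2)"
    by (rule real_sqrt_le_mono)
  also have "\<dots> = sqrt (a \<bullet> (P *v a)) + sqrt (b \<bullet> (P *v b))" using psd[of a] psd[of b] by simp
  finally show ?thesis .
qed

lemma form_scale:
  fixes P :: "real^'n^'n"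
  shows "sqrt ((c *\<^sub>R a) \<bullet> (P *v (c *\<^sub>R a))) = \<bar>c\<bar> * sqrt (a \<bullet> (P *v a))"
proof -
  have "(c *\<^sub>R a) \<bullet> (P *v (c *\<^sub>R a)) = c^2 * (a \<bullet> (P *v a))"
    by (simp add: matrix_vector_mult_scaleR power2_eq_square)
  then show ?thesis by (simp add: real_sqrt_mult)
qed

context lhscb
begin

lemma P_sym: "x \<in> interior K \<Longrightarrow> transpose (matrix_inv (H x)) = matrix_inv (H x)"
  using inv_sym H_sym inv by blast

lemma P_psd: assumes x: "x \<in> interior K" shows "0 \<le> v \<bullet> (matrix_inv (H x) *v v)"
proof -
  let ?w = "matrix_inv (H x) *v v"
  have "H x *v ?w = v" using inv_mv(1) inv x by blast
  then have "v \<bullet> ?w = ?w \<bullet> (H x *v ?w)" by (simp add: inner_commute)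
  then show ?thesis using H_psd[OF x, of ?w] by simp
qed

lemma dn_cs: assumes x: "x \<in> interior K"
  shows "\<bar>w \<bullet> v\<bar> \<le> sqrt (w \<bullet> (H x *v w)) * dual_local_norm H x v"
proof -
  let ?P = "matrix_inv (H x)"
  have HP: "H x *v (?P *v v) = v" using inv_mv(1) inv x by blast
  have PH: "?P *v (H x *v w) = w" using inv_mv(2) inv x by blast
  have "(H x *v w) \<bullet> (?P *v v) = w \<bullet> v"
    using sym_inner[OF H_sym[OF x], of "?P *v v" w] HP by (simp add: inner_commute)
  moreover have "(H x *v w) \<bullet> (?P *v (H x *v w)) = w \<bullet> (H x *v w)"
    using PH by (simp add: inner_commute)
  ultimately show ?thesis
    using cs_sqrt[OF P_sym[OF x] P_psd[OF x], of "H x *v w" v] by (simp add: dual_local_norm_def)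
qed

lemma dn_tri: "x \<in> interior K \<Longrightarrow> dual_local_norm H x (a + b) \<le> dual_local_norm H x a + dual_local_norm H x b"
  unfolding dual_local_norm_def by (rule form_tri[OF P_sym P_psd])

lemma dn_scale: "dual_local_norm H x (c *\<^sub>R a) = \<bar>c\<bar> * dual_local_norm H x a"
  unfolding dual_local_norm_def by (rule form_scale)

lemma dn_g: "x \<in> interior K \<Longrightarrow> dual_local_norm H x (g x) = sqrt \<nu>"
  using nu_dual by (simp add: dual_local_norm_def)

lemma dual_int:
  assumes y: "y \<in> interior K" and mu: "\<mu> > 0" and n: "dual_local_norm H y (s + \<mu> *\<^sub>R g y) \<le> \<mu> / 2"
  shows "s \<in> interior (dual_cone K)"
proof -
  obtain l where l: "l > 0" "\<And>v. l * (norm v)^2 \<le> v \<bullet> (H y *v v)"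
    using pd_lower[OF H_pd[OF y]] by blast
  define e where "e = \<mu> * sqrt l / 2"
  have e0: "e > 0" using mu l by (simp add: e_def)
  have "ball s e \<subseteq> dual_cone K"
  proof
    fix s' assume s': "s' \<in> ball s e"
    have "s' \<bullet> z \<ge> 0" if z: "z \<in> K" for z
    proof -
      define Nz where "Nz = sqrt (z \<bullet> (H y *v z))"
      have Nz: "sqrt l * norm z \<le> Nz"
      proof -
        have "sqrt (l * (norm z)^2) \<le> Nz" unfolding Nz_def using l(2)[of z] by (rule real_sqrt_le_mono)
        then show ?thesis using l by (simp add: real_sqrt_mult)
      qed
      have t1: "(s + \<mu> *\<^sub>R g y) \<bullet> z \<ge> - (\<mu> / 2) * Nz"
      proof -
        have "\<bar>z \<bullet> (s + \<mu> *\<^sub>R g y)\<bar> \<le> Nz * dual_local_norm H y (s + \<mu> *\<^sub>R g y)"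
          using dn_cs[OF y] by (simp add: Nz_def)
        also have "\<dots> \<le> Nz * (\<mu> / 2)" using n H_psd[OF y, of z] by (intro mult_left_mono) (auto simp: Nz_def)
        finally have A: "- (z \<bullet> (s + \<mu> *\<^sub>R g y)) \<le> Nz * (\<mu> / 2)" by (rule abs_le_D2)
        have "(s + \<mu> *\<^sub>R g y) \<bullet> z = z \<bullet> (s + \<mu> *\<^sub>R g y)" by (rule inner_commute)
        then show ?thesis using A by (simp add: algebra_simps)
      qed
      have t2: "- (\<mu> * (g y \<bullet> z)) \<ge> \<mu> * Nz"
      proof -
        have "\<mu> * Nz \<le> \<mu> * (- (g y \<bullet> z))"
          using grad_lower[OF y z] mu unfolding Nz_def by (intro mult_left_mono) auto
        then show ?thesis by simp
      qed
      have t3: "(s' - s) \<bullet> z \<ge> - (e * norm z)"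
      proof -
        have "\<bar>(s' - s) \<bullet> z\<bar> \<le> norm (s' - s) * norm z" by (rule Cauchy_Schwarz_ineq2)
        also have "\<dots> \<le> e * norm z" using s' by (intro mult_right_mono) (auto simp: dist_norm norm_minus_commute)
        finally show ?thesis by simp
      qed
      have "s' \<bullet> z = (s + \<mu> *\<^sub>R g y) \<bullet> z - \<mu> * (g y \<bullet> z) + (s' - s) \<bullet> z"
        by (simp add: inner_add_left inner_diff_left)
      also have "\<dots> \<ge> - (\<mu> / 2) * Nz + \<mu> * Nz - e * norm z" using t1 t2 t3 by linarith
      finally have "s' \<bullet> z \<ge> (\<mu> / 2) * Nz - e * norm z" by (simp add: mult.commute)
      moreover have "(\<mu> / 2) * Nz \<ge> e * norm z"
      proof -
        have "e * norm z = (\<mu> / 2) * (sqrt l * norm z)" by (simp add: e_def)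
        also have "\<dots> \<le> (\<mu> / 2) * Nz" using Nz mu by (intro mult_left_mono) auto
        finally show ?thesis .
      qed
      ultimately show ?thesis by simp
    qed
    then show "s' \<in> dual_cone K" by (simp add: dual_cone_def)
  qed
  then show ?thesis using e0 mem_interior by blast
qed

end

context lhscb
begin

lemma sandwich:
  assumes x: "x \<in> interior K" and r: "r = sqrt (h \<bullet> (H x *v h))" "r < 1" and t: "0 \<le> t" "t \<le> 1"
  shows "(1 - t * r)^2 * (u \<bullet> (H x *v u)) \<le> u \<bullet> (H (x + t *\<^sub>R h) *v u)"
    and "u \<bullet> (H (x + t *\<^sub>R h) *v u) \<le> (u \<bullet> (H x *v u)) / (1 - t * r)^2"
proof -
  have r0: "r \<ge> 0" using r H_psd[OF x, of h] by simp
  have xh: "x + 1 *\<^sub>R h \<in> interior K" using dikin[OF x] r by simp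
  have inU: "x + s *\<^sub>R h \<in> interior K" if "0 \<le> s" "s \<le> 1" for s using seg_conv[OF x xh that] .
  have pos: "1 - s * r > 0" if "0 \<le> s" "s \<le> 1" for s
  proof -
    have "s * r \<le> 1 * r" using that r0 by (intro mult_right_mono) auto
    then show ?thesis using r(2) by linarith
  qed
  define \<psi> where "\<psi> s = u \<bullet> (H (x + s *\<^sub>R h) *v u)" for s
  define \<psi>' where "\<psi>' s = u \<bullet> (H' (x + s *\<^sub>R h) h *v u)" for s
  have blq: "bounded_linear (\<lambda>M::real^'n^'n. u \<bullet> (M *v u))"
    using bounded_linear_compose[OF bounded_linear_inner_right bl_mat_vec] .
  have d\<psi>: "DERIV \<psi> s :> \<psi>' s" if "0 \<le> s" "s \<le> 1" for s
    unfolding \<psi>_def \<psi>'_def using line_real_deriv_lin[OF dH'[OF inU[OF that]] blq] .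
  have \<psi>nn: "\<psi> s \<ge> 0" if "0 \<le> s" "s \<le> 1" for s using H_psd[OF inU[OF that]] by (simp add: \<psi>_def)
  have key: "(1 - s * r) * \<bar>\<psi>' s\<bar> \<le> 2 * r * \<psi> s" if s: "0 \<le> s" "s \<le> 1" for s
  proof -
    have qb: "sqrt (h \<bullet> (H (x + s *\<^sub>R h) *v h)) \<le> r / (1 - s * r)"
      using seg_q[OF x inU[OF s] s] r by simp
    have "\<bar>\<psi>' s\<bar> \<le> 2 * sqrt (h \<bullet> (H (x + s *\<^sub>R h) *v h)) * \<psi> s"
      using trilin[OF inU[OF s], of u h] by (simp add: \<psi>'_def \<psi>_def)
    also have "\<dots> \<le> 2 * (r / (1 - s * r)) * \<psi> s"
      using qb \<psi>nn[OF s] by (intro mult_right_mono mult_left_mono) auto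
    finally have "(1 - s * r) * \<bar>\<psi>' s\<bar> \<le> (1 - s * r) * (2 * (r / (1 - s * r)) * \<psi> s)"
      using pos[OF s] by (intro mult_left_mono) auto
    also have "\<dots> = 2 * r * \<psi> s" using pos[OF s] by (simp add: field_simps)
    finally show ?thesis .
  qed
  have dg2: "DERIV (\<lambda>s. (1 - s * r)^2) s :> 2 * (1 - s * r) * (- r)" for s
    by (auto intro!: derivative_eq_intros simp: algebra_simps)
  have up: "\<psi> t * (1 - t * r)^2 \<le> \<psi> 0 * (1 - 0 * r)^2"
  proof (rule DERIV_nonpos_imp_nonincreasing[OF t(1)])
    fix s assume s: "0 \<le> s" "s \<le> t"
    have s1: "s \<le> 1" using s t by simp
    have D: "DERIV (\<lambda>s. \<psi> s * (1 - s * r)^2) s :> \<psi>' s * (1 - s * r)^2 + 2 * (1 - s * r) * (- r) * \<psi> s"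
      using DERIV_mult[OF d\<psi>[OF s(1) s1] dg2] .
    have "\<psi>' s * (1 - s * r)^2 + 2 * (1 - s * r) * (- r) * \<psi> s
        = (1 - s * r) * ((1 - s * r) * \<psi>' s - 2 * r * \<psi> s)" by (simp add: power2_eq_square algebra_simps)
    also have "\<dots> \<le> 0"
    proof -
      have "(1 - s * r) * \<psi>' s \<le> (1 - s * r) * \<bar>\<psi>' s\<bar>" using pos[OF s(1) s1] by (intro mult_left_mono) auto
      then have "(1 - s * r) * \<psi>' s - 2 * r * \<psi> s \<le> 0" using key[OF s(1) s1] by linarith
      then show ?thesis using pos[OF s(1) s1] by (simp add: mult_nonneg_nonpos)
    qed
    finally show "\<exists>y. DERIV (\<lambda>s. \<psi> s * (1 - s * r)^2) s :> y \<and> y \<le> 0" using D by blast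
  qed
  have lo: "\<psi> 0 / (1 - 0 * r)^2 \<le> \<psi> t / (1 - t * r)^2"
  proof (rule DERIV_nonneg_imp_nondecreasing[OF t(1)])
    fix s assume s: "0 \<le> s" "s \<le> t"
    have s1: "s \<le> 1" using s t by simp
    have nz: "(1 - s * r)^2 \<noteq> 0" using pos[OF s(1) s1] by simp
    have D: "DERIV (\<lambda>s. \<psi> s / (1 - s * r)^2) s :>
        (\<psi>' s * (1 - s * r)^2 - \<psi> s * (2 * (1 - s * r) * (- r))) / ((1 - s * r)^2 * (1 - s * r)^2)"
      using DERIV_divide[OF d\<psi>[OF s(1) s1] dg2 nz] .
    have num: "\<psi>' s * (1 - s * r)^2 - \<psi> s * (2 * (1 - s * r) * (- r))
        = (1 - s * r) * ((1 - s * r) * \<psi>' s + 2 * r * \<psi> s)" by (simp add: power2_eq_square algebra_simps)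
    have "0 \<le> (1 - s * r) * ((1 - s * r) * \<psi>' s + 2 * r * \<psi> s)"
    proof -
      have "(1 - s * r) * (- \<bar>\<psi>' s\<bar>) \<le> (1 - s * r) * \<psi>' s"
        using pos[OF s(1) s1] by (intro mult_left_mono) auto
      then have "- ((1 - s * r) * \<bar>\<psi>' s\<bar>) \<le> (1 - s * r) * \<psi>' s" by simp
      then have "0 \<le> (1 - s * r) * \<psi>' s + 2 * r * \<psi> s" using key[OF s(1) s1] by linarith
      then show ?thesis using pos[OF s(1) s1] by simp
    qed
    then have "0 \<le> (\<psi>' s * (1 - s * r)^2 - \<psi> s * (2 * (1 - s * r) * (- r))) / ((1 - s * r)^2 * (1 - s * r)^2)"
      unfolding num by simp
    then show "\<exists>y. DERIV (\<lambda>s. \<psi> s / (1 - s * r)^2) s :> y \<and> 0 \<le> y" using D by blast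
  qed
  have pt: "(1 - t * r)^2 > 0" using pos[OF t] by simp
  show "(1 - t * r)^2 * (u \<bullet> (H x *v u)) \<le> u \<bullet> (H (x + t *\<^sub>R h) *v u)"
    using lo pt by (simp add: \<psi>_def field_simps)
  show "u \<bullet> (H (x + t *\<^sub>R h) *v u) \<le> (u \<bullet> (H x *v u)) / (1 - t * r)^2"
    using up pt by (simp add: \<psi>_def field_simps)
qed

end

context lhscb
begin

lemma grad_est:
  assumes x: "x \<in> interior K" and r: "r = sqrt (h \<bullet> (H x *v h))" "r < 1"
  shows "dual_local_norm H x (g (x + h) - g x - H x *v h) \<le> r^2 / (1 - r)"
proof -
  have r0: "r \<ge> 0" using r H_psd[OF x, of h] by simp
  have xh: "x + 1 *\<^sub>R h \<in> interior K" using dikin[OF x] r by simp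
  have inU: "x + s *\<^sub>R h \<in> interior K" if "0 \<le> s" "s \<le> 1" for s using seg_conv[OF x xh that] .
  have pos: "1 - s * r > 0" if "0 \<le> s" "s \<le> 1" for s
  proof -
    have "s * r \<le> 1 * r" using that r0 by (intro mult_right_mono) auto
    then show ?thesis using r(2) by linarith
  qed
  define P where "P = matrix_inv (H x)"
  define e where "e = g (x + h) - g x - H x *v h"
  define w where "w = P *v e"
  define ne where "ne = dual_local_norm H x e"
  have ivx: "invertible (H x)" using inv x by blast
  have Hw: "H x *v w = e" using inv_mv(1)[OF ivx] by (simp add: w_def P_def)
  have Qw: "w \<bullet> (H x *v w) = e \<bullet> (P *v e)" using Hw by (simp add: w_def inner_commute)
  have ne: "ne = sqrt (w \<bullet> (H x *v w))" using Qw by (simp add: ne_def dual_local_norm_def P_def)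
  have ne0: "ne \<ge> 0" using P_psd[OF x, of e] by (simp add: ne_def dual_local_norm_def)
  define \<psi> where "\<psi> s = w \<bullet> g (x + s *\<^sub>R h) - w \<bullet> g x - s * (w \<bullet> (H x *v h))" for s
  define c where "c s = 1 / (1 - s * r)^2 - 1" for s
  have d\<psi>: "DERIV \<psi> s :> w \<bullet> (H (x + s *\<^sub>R h) *v h) - w \<bullet> (H x *v h)" if s: "0 \<le> s" "s \<le> 1" for s
  proof -
    have d1: "((\<lambda>s. w \<bullet> g (x + s *\<^sub>R h)) has_real_derivative w \<bullet> (H (x + s *\<^sub>R h) *v h)) (at s)"
      using line_real_deriv_lin[OF dg'[OF inU[OF s]] bounded_linear_inner_right, of w] by simp
    have "DERIV (\<lambda>s. w \<bullet> g (x + s *\<^sub>R h) - w \<bullet> g x - s * (w \<bullet> (H x *v h))) s :>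
        w \<bullet> (H (x + s *\<^sub>R h) *v h) - 0 - 1 * (w \<bullet> (H x *v h))"
      by (intro DERIV_diff d1 DERIV_const DERIV_cmult_right[where c="w \<bullet> (H x *v h)", OF DERIV_ident, simplified]
          ) (auto intro!: derivative_eq_intros)
    then show ?thesis by (simp add: \<psi>_def[abs_def])
  qed
  have dbnd: "w \<bullet> (H (x + s *\<^sub>R h) *v h) - w \<bullet> (H x *v h) \<le> c s * ne * r" if s: "0 \<le> s" "s \<le> 1" for s
  proof -
    define D where "D = H (x + s *\<^sub>R h) - H x"
    have Dv: "D *v v = H (x + s *\<^sub>R h) *v v - H x *v v" for v
      by (simp add: D_def matrix_vector_mult_diff_rdistrib)
    have symD: "transpose D = D"
      by (rule sym_from_inner) (simp add: Dv inner_diff_right sym_inner[OF H_sym[OF inU[OF s]]] sym_inner[OF H_sym[OF x]])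
    have ps: "(1 - s * r)^2 > 0" using pos[OF s] by simp
    have c0: "c s \<ge> 0"
    proof -
      have "(1 - s * r)^2 \<le> 1" using pos[OF s] r0 s by (smt (verit) mult_nonneg_nonneg power_le_one)
      then show ?thesis using ps by (simp add: c_def)
    qed
    have bnd: "\<bar>u \<bullet> (D *v u)\<bar> \<le> c s * (u \<bullet> (H x *v u))" for u
    proof -
      have l: "(1 - s * r)^2 * (u \<bullet> (H x *v u)) \<le> u \<bullet> (H (x + s *\<^sub>R h) *v u)"
        using sandwich(1)[OF x r s] .
      have h2: "u \<bullet> (H (x + s *\<^sub>R h) *v u) \<le> (u \<bullet> (H x *v u)) / (1 - s * r)^2"
        using sandwich(2)[OF x r s] .
      have qx: "u \<bullet> (H x *v u) \<ge> 0" using H_psd[OF x] .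
      define a where "a = (1 - s * r)^2"
      have a0: "a > 0" using ps by (simp add: a_def)
      have "1 - a \<le> 1 / a - 1"
      proof -
        have "0 \<le> (1 - a)^2 / a" using a0 by simp
        also have "(1 - a)^2 / a = 1 / a - 1 - (1 - a)" using a0 by (simp add: field_simps power2_eq_square)
        finally show ?thesis by simp
      qed
      then have m: "(1 - a) * (u \<bullet> (H x *v u)) \<le> (1 / a - 1) * (u \<bullet> (H x *v u))"
        using qx by (intro mult_right_mono) auto
      have "u \<bullet> (D *v u) \<le> (1 / a - 1) * (u \<bullet> (H x *v u))"
        using h2 a0 by (simp add: Dv inner_diff_right a_def field_simps)
      moreover have "- (u \<bullet> (D *v u)) \<le> (1 / a - 1) * (u \<bullet> (H x *v u))"
        using l m by (simp add: Dv inner_diff_right a_def algebra_simps)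
      ultimately show ?thesis by (simp add: c_def a_def abs_le_iff)
    qed
    have "\<bar>w \<bullet> (D *v h)\<bar> \<le> c s * sqrt (w \<bullet> (H x *v w)) * sqrt (h \<bullet> (H x *v h))"
      by (rule bilin_bound[OF H_sym[OF x] H_psd[OF x] symD c0 bnd])
    then have "w \<bullet> (D *v h) \<le> c s * ne * r" using ne r(1) by simp
    then show ?thesis by (simp add: Dv inner_diff_right)
  qed
  define \<Phi> where "\<Phi> s = ne * (1 / (1 - s * r) - 1 - s * r)" for s
  have d\<Phi>: "DERIV \<Phi> s :> ne * (r / (1 - s * r)^2 - r)" if s: "0 \<le> s" "s \<le> 1" for s
  proof -
    have nz: "1 - s * r \<noteq> 0" using pos[OF s] by simp
    show ?thesis unfolding \<Phi>_def[abs_def] using nz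
      by (auto intro!: derivative_eq_intros simp: power2_eq_square field_simps)
  qed
  have "\<psi> 1 - \<Phi> 1 \<le> \<psi> 0 - \<Phi> 0"
  proof (rule DERIV_nonpos_imp_nonincreasing[of 0 1])
    fix s :: real assume s: "0 \<le> s" "s \<le> 1"
    have "DERIV (\<lambda>s. \<psi> s - \<Phi> s) s :> (w \<bullet> (H (x + s *\<^sub>R h) *v h) - w \<bullet> (H x *v h)) - ne * (r / (1 - s * r)^2 - r)"
      by (intro DERIV_diff d\<psi>[OF s] d\<Phi>[OF s])
    moreover have "ne * (r / (1 - s * r)^2 - r) = c s * ne * r" by (simp add: c_def algebra_simps)
    ultimately show "\<exists>y. DERIV (\<lambda>s. \<psi> s - \<Phi> s) s :> y \<and> y \<le> 0" using dbnd[OF s] by fastforce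
  qed simp
  moreover have "\<psi> 0 = 0" by (simp add: \<psi>_def)
  moreover have "\<Phi> 0 = 0" by (simp add: \<Phi>_def)
  moreover have "\<psi> 1 = ne^2"
  proof -
    have "\<psi> 1 = w \<bullet> e" by (simp add: \<psi>_def e_def inner_diff_right)
    also have "\<dots> = e \<bullet> (P *v e)" by (simp add: w_def inner_commute)
    also have "\<dots> = ne^2" using P_psd[OF x, of e] by (simp add: ne_def dual_local_norm_def P_def)
    finally show ?thesis .
  qed
  moreover have "\<Phi> 1 = ne * (r^2 / (1 - r))"
    using pos[of 1] by (simp add: \<Phi>_def field_simps power2_eq_square)
  ultimately have "ne^2 \<le> ne * (r^2 / (1 - r))" by simp
  then have "ne \<le> r^2 / (1 - r)"
  proof (cases "ne = 0")
    case True then show ?thesis using pos[of 1] by simp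
  next
    case False
    then have "ne > 0" using ne0 by simp
    moreover assume "ne^2 \<le> ne * (r^2 / (1 - r))"
    ultimately have "ne * ne \<le> ne * (r^2 / (1 - r))" by (simp add: power2_eq_square)
    then show ?thesis using \<open>ne > 0\<close> by (simp only: mult_le_cancel_left_pos)
  qed
  then show ?thesis by (simp add: ne_def e_def)
qed

lemma dn_compare:
  assumes x: "x \<in> interior K" and r: "r = sqrt (h \<bullet> (H x *v h))" "r < 1"
  shows "dual_local_norm H (x + h) v \<le> dual_local_norm H x v / (1 - r)"
proof -
  have r0: "r \<ge> 0" using r H_psd[OF x, of h] by simp
  have y: "x + h \<in> interior K" using dikin[OF x] r by simp
  define y where "y = x + h"
  have yU: "y \<in> interior K" using y by (simp add: y_def)
  define w0 where "w0 = matrix_inv (H y) *v v"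
  define ny where "ny = dual_local_norm H y v"
  define nx where "nx = dual_local_norm H x v"
  have ivy: "invertible (H y)" using inv yU by blast
  have Hw0: "H y *v w0 = v" using inv_mv(1)[OF ivy] by (simp add: w0_def)
  have Qy: "w0 \<bullet> (H y *v w0) = ny^2"
  proof -
    have "w0 \<bullet> (H y *v w0) = v \<bullet> (matrix_inv (H y) *v v)" using Hw0 by (simp add: w0_def inner_commute)
    then show ?thesis using P_psd[OF yU, of v] by (simp add: ny_def dual_local_norm_def)
  qed
  have wv: "w0 \<bullet> v = ny^2" using Qy Hw0 by simp
  have sl: "(1 - 1 * r)^2 * (w0 \<bullet> (H x *v w0)) \<le> w0 \<bullet> (H (x + 1 *\<^sub>R h) *v w0)"
    using sandwich(1)[OF x r, of 1 w0] by simp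
  have p: "1 - r > 0" using r by simp
  have "sqrt (w0 \<bullet> (H x *v w0)) \<le> ny / (1 - r)"
  proof -
    have "(1 - r)^2 * (w0 \<bullet> (H x *v w0)) \<le> ny^2" using sl Qy by (simp add: y_def)
    then have "w0 \<bullet> (H x *v w0) \<le> (ny / (1 - r))^2" using p by (simp add: field_simps power_divide)
    then have "sqrt (w0 \<bullet> (H x *v w0)) \<le> sqrt ((ny / (1 - r))^2)" by (rule real_sqrt_le_mono)
    also have "\<dots> = ny / (1 - r)" using p P_psd[OF yU, of v] by (simp add: ny_def dual_local_norm_def)
    finally show ?thesis .
  qed
  moreover have "\<bar>w0 \<bullet> v\<bar> \<le> sqrt (w0 \<bullet> (H x *v w0)) * nx" using dn_cs[OF x] by (simp add: nx_def)
  ultimately have "ny^2 \<le> ny / (1 - r) * nx"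
    using wv by (smt (verit) mult_right_mono dual_local_norm_def nx_def real_sqrt_ge_zero P_psd[OF x])
  moreover have ny0: "ny \<ge> 0" using P_psd[OF yU, of v] by (simp add: ny_def dual_local_norm_def)
  ultimately have "ny \<le> nx / (1 - r)"
  proof (cases "ny = 0")
    case True then show ?thesis using p P_psd[OF x, of v] by (simp add: nx_def dual_local_norm_def)
  next
    case False
    assume "ny^2 \<le> ny / (1 - r) * nx"
    then have "ny * ny \<le> ny * (nx / (1 - r))" by (simp add: power2_eq_square)
    moreover have "ny > 0" using False ny0 by simp
    ultimately show ?thesis by (simp only: mult_le_cancel_left_pos)
  qed
  then show ?thesis by (simp add: ny_def nx_def y_def)
qed

end

lemma final_arith:
  fixes r \<eta> \<nu> \<tau> E :: real
  assumes r0: "0 \<le> r" and r\<eta>: "r \<le> \<eta>" and \<eta>0: "0 < \<eta>" and \<eta>1: "\<eta> \<le> 1/4" and \<nu>0: "0 \<le> \<nu>"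
    and \<tau>: "\<tau> > 0" and E: "E \<le> r^2 / (1 - r)^2"
  shows "\<tau> * E + ((\<eta> / 2) / (sqrt \<nu> + 1) * \<tau>) * sqrt \<nu> \<le> \<eta> * ((1 - (\<eta> / 2) / (sqrt \<nu> + 1)) * \<tau>)"
proof -
  define \<theta> where "\<theta> = (\<eta> / 2) / (sqrt \<nu> + 1)"
  have sq0: "sqrt \<nu> \<ge> 0" using \<nu>0 by simp
  have r1: "r < 1" using r\<eta> \<eta>1 by simp
  have "r / (1 - r) \<le> \<eta> / (1 - \<eta>)"
    using r\<eta> r1 \<eta>1 by (simp add: field_simps)
  also have "\<eta> / (1 - \<eta>) \<le> (4/3) * \<eta>" using \<eta>0 \<eta>1 by (simp add: field_simps)
  finally have q: "r / (1 - r) \<le> (4/3) * \<eta>" .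
  have "r^2 / (1 - r)^2 = (r / (1 - r))^2" by (simp add: power_divide)
  also have "\<dots> \<le> ((4/3) * \<eta>)^2" using q r0 r1 by (intro power_mono) auto
  also have "\<dots> \<le> (4/9) * \<eta>"
  proof -
    have "((4/3) * \<eta>)^2 = (16/9) * \<eta> * \<eta>" by (simp add: power2_eq_square)
    also have "\<dots> \<le> (16/9) * \<eta> * (1/4)" using \<eta>0 \<eta>1 by (intro mult_left_mono) auto
    finally show ?thesis by simp
  qed
  finally have R: "r^2 / (1 - r)^2 \<le> (4/9) * \<eta>" .
  have E1: "E \<le> (4/9) * \<eta>" using E R by linarith
  have nz: "sqrt \<nu> + 1 \<noteq> 0" using sq0 by linarith
  have th: "\<theta> * (sqrt \<nu> + 1) = \<eta> / 2" using nz \<theta>_def nonzero_eq_divide_eq by metis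
  have th0: "\<theta> \<ge> 0" using \<eta>0 sq0 by (simp add: \<theta>_def)
  have "\<theta> * sqrt \<nu> + \<eta> * \<theta> \<le> \<theta> * sqrt \<nu> + 1 * \<theta>" using \<eta>1 th0 by (intro add_left_mono mult_right_mono) auto
  also have "\<dots> = \<eta> / 2" using th by (simp add: algebra_simps)
  finally have T: "\<theta> * sqrt \<nu> + \<eta> * \<theta> \<le> \<eta> / 2" .
  have "E + \<theta> * sqrt \<nu> \<le> \<eta> * (1 - \<theta>)" using E1 T \<eta>0 by (simp add: algebra_simps)
  then have "\<tau> * (E + \<theta> * sqrt \<nu>) \<le> \<tau> * (\<eta> * (1 - \<theta>))" using \<tau> by (intro mult_left_mono) auto
  then show ?thesis by (simp add: \<theta>_def algebra_simps)
qed

theorem lemma2p2: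
  fixes K :: "(real^'n) set" and f :: "real^'n \<Rightarrow> real"
    and g :: "real^'n \<Rightarrow> real^'n" and H :: "real^'n \<Rightarrow> real^'n^'n" and \<nu> :: real
    and A :: "real^'n^'m" and b :: "real^'m" and c :: "real^'n"
    and \<tau> \<eta> :: real and x dx s ds :: "real^'n" and y dy :: "real^'m"
  assumes "proper_cone K"
    and "LHSCB K f g H \<nu>"
    and "rank A = CARD('m)"
    and "\<tau> > 0" and "0 < \<eta>" and "\<eta> \<le> 1/4"
    and "(x, y, s) \<in> nbhd K g H A b c \<eta> \<tau>"
    and "A *v dx = 0"
    and "transpose A *v dy + ds = 0"
    and "\<tau> *\<^sub>R (H x *v dx) + ds = - (s + \<tau> *\<^sub>R g x)"
  shows "(x + dx, y + dy, s + ds)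
           \<in> nbhd K g H A b c \<eta> ((1 - (\<eta> / 2) / (sqrt \<nu> + 1)) * \<tau>)"
proof -
  note pc = assms(1) and L = assms(2) and \<tau>0 = assms(4) and \<eta>0 = assms(5) and \<eta>1 = assms(6)
  obtain H' where H': "\<forall>x\<in>interior K. (H has_derivative H' x) (at x)
          \<and> (\<forall>h. \<bar>h \<bullet> (H' x h *v h)\<bar> \<le> 2 * (h \<bullet> (H x *v h)) powr (3/2))"
    using L unfolding LHSCB_def by blast
  interpret lhscb K f g H H' \<nu>
  proof
    show "proper_cone K" by (rule pc)
    show "\<forall>x\<in>interior K. (f has_derivative (\<lambda>h. g x \<bullet> h)) (at x)" using L by (simp add: LHSCB_def)
    show "\<forall>x\<in>interior K. (g has_derivative (\<lambda>h. H x *v h)) (at x)" using L by (simp add: LHSCB_def)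
    show "\<forall>x\<in>interior K. (H has_derivative H' x) (at x)" using H' by blast
    show "\<forall>x\<in>interior K. \<forall>h. \<bar>h \<bullet> (H' x h *v h)\<bar> \<le> 2 * (h \<bullet> (H x *v h)) powr (3/2)" using H' by blast
    show "strictly_convex_on (interior K) f" using L by (simp add: LHSCB_def)
    show "\<forall>p\<in>frontier K. filterlim f at_top (at p within interior K)" using L by (simp add: LHSCB_def)
    show "\<forall>x\<in>interior K. invertible (H x)" using L by (simp add: LHSCB_def)
    show "\<forall>x\<in>interior K. \<forall>t>0. f (t *\<^sub>R x) = f x - \<nu> * ln t" using L by (simp add: LHSCB_def)
  qed
  have xU: "x \<in> interior K" and Ax: "A *v x = b" and ATy: "transpose A *v y + s = c"
    and nrm: "dual_local_norm H x (s + \<tau> *\<^sub>R g x) \<le> \<eta> * \<tau>"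
    using assms(7) by (auto simp: nbhd_def strictly_feasible_def)
  define P where "P = matrix_inv (H x)"
  have ivx: "invertible (H x)" using inv xU by blast
  have orth: "dx \<bullet> ds = 0"
  proof -
    have "ds = - (transpose A *v dy)" using assms(9) by (simp add: eq_neg_iff_add_eq_0 add.commute)
    then have "dx \<bullet> ds = - (dx \<bullet> (dy v* A))" by simp
    also have "dx \<bullet> (dy v* A) = dy \<bullet> (A *v dx)" by (subst inner_commute) (rule dot_lmul_matrix)
    finally show ?thesis using assms(8) by simp
  qed
  define r where "r = sqrt (dx \<bullet> (H x *v dx))"
  have r0: "r \<ge> 0" using H_psd[OF xU, of dx] by (simp add: r_def)
  define v where "v = s + \<tau> *\<^sub>R g x"
  have v: "v = - (\<tau> *\<^sub>R (H x *v dx) + ds)" using assms(10) by (simp add: v_def)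
  have Pv: "P *v v = - (\<tau> *\<^sub>R dx + P *v ds)"
  proof -
    have "P *v v = - (\<tau> *\<^sub>R (P *v (H x *v dx)) + P *v ds)"
      by (simp add: v matrix_vector_right_distrib matrix_vector_mult_diff_distrib matrix_vector_mult_scaleR linear_neg[OF matrix_vector_mul_linear])
    then show ?thesis using inv_mv(2)[OF ivx] by (simp add: P_def)
  qed
  have "v \<bullet> (P *v v) = \<tau>^2 * (dx \<bullet> (H x *v dx)) + 2 * \<tau> * (dx \<bullet> ds) + ds \<bullet> (P *v ds)"
  proof -
    have c1: "(H x *v dx) \<bullet> (P *v ds) = dx \<bullet> ds"
    proof -
      have "(H x *v dx) \<bullet> (P *v ds) = (P *v ds) \<bullet> (H x *v dx)" by (rule inner_commute)
      also have "\<dots> = dx \<bullet> (H x *v (P *v ds))" by (rule sym_inner[OF H_sym[OF xU]])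
      also have "\<dots> = dx \<bullet> ds" using inv_mv(1)[OF ivx] by (simp add: P_def)
      finally show ?thesis .
    qed
    have c2: "(H x *v dx) \<bullet> dx = dx \<bullet> (H x *v dx)" by (rule inner_commute)
    have c3: "ds \<bullet> dx = dx \<bullet> ds" by (rule inner_commute)
    have "v \<bullet> (P *v v) = v \<bullet> (- (\<tau> *\<^sub>R dx + P *v ds))" by (simp only: Pv)
    also have "\<dots> = (\<tau> *\<^sub>R (H x *v dx) + ds) \<bullet> (\<tau> *\<^sub>R dx + P *v ds)"
      by (simp only: v inner_minus_left inner_minus_right minus_minus)
    also have "\<dots> = \<tau> * \<tau> * ((H x *v dx) \<bullet> dx) + \<tau> * ((H x *v dx) \<bullet> (P *v ds)) + \<tau> * (ds \<bullet> dx) + ds \<bullet> (P *v ds)"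
      by (simp add: inner_add_left inner_add_right algebra_simps)
    also have "\<dots> = \<tau>^2 * (dx \<bullet> (H x *v dx)) + 2 * \<tau> * (dx \<bullet> ds) + ds \<bullet> (P *v ds)"
      unfolding c1 c2 c3 by (simp add: power2_eq_square)
    finally show ?thesis .
  qed
  then have "v \<bullet> (P *v v) \<ge> \<tau>^2 * r^2"
    using orth P_psd[OF xU, of ds] H_psd[OF xU, of dx] by (simp add: P_def r_def)
  then have "sqrt (\<tau>^2 * r^2) \<le> dual_local_norm H x v"
    by (simp add: dual_local_norm_def P_def)
  moreover have "sqrt (\<tau>^2 * r^2) = \<tau> * r" using \<tau>0 r0 by (simp add: real_sqrt_mult)
  ultimately have A: "\<tau> * r \<le> dual_local_norm H x (s + \<tau> *\<^sub>R g x)" by (simp add: v_def)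
  have B: "\<tau> * r \<le> \<tau> * \<eta>" using A nrm by (simp add: mult.commute)
  have r\<eta>: "r \<le> \<eta>" using B \<tau>0 by (simp only: mult_le_cancel_left_pos)
  have r1: "r < 1" using r\<eta> \<eta>1 by simp
  have x1: "x + dx \<in> interior K" using dikin[OF xU] r1 by (simp add: r_def)
  define e where "e = g (x + dx) - g x - H x *v dx"
  have E: "dual_local_norm H (x + dx) e \<le> r^2 / (1 - r)^2"
  proof -
    have "dual_local_norm H (x + dx) e \<le> dual_local_norm H x e / (1 - r)"
      using dn_compare[OF xU r_def r1] .
    also have "\<dots> \<le> (r^2 / (1 - r)) / (1 - r)"
      using grad_est[OF xU r_def r1] r1 by (intro divide_right_mono) (auto simp: e_def)
    also have "\<dots> = r^2 / (1 - r)^2" by (simp add: power2_eq_square)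
    finally show ?thesis .
  qed
  define \<theta> where "\<theta> = (\<eta> / 2) / (sqrt \<nu> + 1)"
  have sq0: "sqrt \<nu> \<ge> 0" using nu_nonneg by simp
  have \<theta>0: "\<theta> \<ge> 0" using \<eta>0 sq0 by (simp add: \<theta>_def)
  have \<theta>1: "\<theta> \<le> 1/8"
  proof -
    have "(\<eta> / 2) / (sqrt \<nu> + 1) \<le> (\<eta> / 2) / 1"
      by (rule divide_left_mono) (use \<eta>0 sq0 in \<open>auto simp: add_nonneg_pos\<close>)
    then have "\<theta> \<le> \<eta> / 2" by (simp add: \<theta>_def)
    then show ?thesis using \<eta>1 by simp
  qed
  define \<tau>p where "\<tau>p = (1 - \<theta>) * \<tau>"
  have \<tau>p0: "\<tau>p > 0" using \<theta>1 \<tau>0 by (simp add: \<tau>p_def)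
  have dec: "s + ds + \<tau>p *\<^sub>R g (x + dx) = \<tau> *\<^sub>R e + (- (\<theta> * \<tau>)) *\<^sub>R g (x + dx)"
  proof -
    have "ds = (\<tau> *\<^sub>R (H x *v dx) + ds) - \<tau> *\<^sub>R (H x *v dx)" by simp
    also have "\<dots> = - (s + \<tau> *\<^sub>R g x) - \<tau> *\<^sub>R (H x *v dx)" by (simp only: assms(10))
    finally have "ds = - (s + \<tau> *\<^sub>R g x) - \<tau> *\<^sub>R (H x *v dx)" .
    then have sd: "s + ds = - (\<tau> *\<^sub>R (H x *v dx)) - \<tau> *\<^sub>R g x" by simp
    have "s + ds + \<tau>p *\<^sub>R g (x + dx) = - (\<tau> *\<^sub>R (H x *v dx)) - \<tau> *\<^sub>R g x + ((1 - \<theta>) * \<tau>) *\<^sub>R g (x + dx)"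
      unfolding sd \<tau>p_def ..
    also have "\<dots> = \<tau> *\<^sub>R e + (- (\<theta> * \<tau>)) *\<^sub>R g (x + dx)"
      by (simp add: e_def algebra_simps)
    finally show ?thesis .
  qed
  have bound: "dual_local_norm H (x + dx) (s + ds + \<tau>p *\<^sub>R g (x + dx)) \<le> \<eta> * \<tau>p"
  proof -
    have "dual_local_norm H (x + dx) (s + ds + \<tau>p *\<^sub>R g (x + dx))
        \<le> dual_local_norm H (x + dx) (\<tau> *\<^sub>R e) + dual_local_norm H (x + dx) ((- (\<theta> * \<tau>)) *\<^sub>R g (x + dx))"
      unfolding dec by (rule dn_tri[OF x1])
    also have "\<dots> = \<tau> * dual_local_norm H (x + dx) e + (\<theta> * \<tau>) * sqrt \<nu>"
      using \<tau>0 \<theta>0 dn_scale[of "x + dx" "- (\<theta> * \<tau>)" "g (x + dx)"] dn_scale[of "x + dx" \<tau> e]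
        dn_g[OF x1] by (simp add: abs_mult)
    also have "\<dots> \<le> \<eta> * \<tau>p"
      using final_arith[OF r0 r\<eta> \<eta>0 \<eta>1 nu_nonneg \<tau>0 E] by (simp add: \<tau>p_def \<theta>_def)
    finally show ?thesis .
  qed
  have sint: "s + ds \<in> interior (dual_cone K)"
  proof (rule dual_int[OF x1 \<tau>p0])
    have "\<eta> * \<tau>p \<le> \<tau>p / 2" using \<eta>1 \<tau>p0 by (simp add: field_simps)
    then show "dual_local_norm H (x + dx) (s + ds + \<tau>p *\<^sub>R g (x + dx)) \<le> \<tau>p / 2" using bound by simp
  qed
  have feas1: "A *v (x + dx) = b" using Ax assms(8) by (simp add: matrix_vector_right_distrib)
  have feas2: "transpose A *v (y + dy) + (s + ds) = c"
    using ATy assms(9) by (simp add: matrix_vector_right_distrib algebra_simps)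
  show ?thesis
    using x1 sint feas1 feas2 bound
    by (simp add: nbhd_def strictly_feasible_def \<tau>p_def \<theta>_def)
qed

end
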